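(* Let $\ell$ be a positive integer, and let $P_\ell$ be the set of all polynomials of length $\ell$ (degree $\ell-1$) in $\mathbb{C}[z]$ with nonzero constant coefficient. Define four maps from $P_\ell\times P_\ell$ to itself: \[ s(f,g)=(g,f),\quad n(f,g)=(-f,g),\quad h(f,g)=(\widetilde{f},\widetilde{g}),\quad r(f,g)=(f^\dagger,g^\dagger). \] These generate a group $G_{\ell,\ell}=\langle s,n,h,r\rangle$ of permutations of $P_\ell\times P_\ell$, which contains a dihedral subgroup $D$ of order $8$ generated by $ns$ and $s$, where $ns$ has order $4$, $s$ has order $2$, and $s(ns)s^{-1}=(ns)^{-1}$. Furthermore: \begin{enumerate} \item If $\ell=1$, then $G_{\ell,\ell}$ is the internal direct product of $D$ and the cyclic group $\langle r\rangle$ of order $2$. \item If $\ell$ is odd and $\ell>1$, then $G_{\ell,\ell}$ is the internal direct product of $D$, the cyclic subgroup $\langle h\rangle$ of order $2$, and the cyclic subgroup $\langle r\rangle$ of order $2$. \item If $\ell$ is even, then $G_{\ell,\ell}$ is the internal central product of $D$ and another dihedral subgroup $\Delta$ of order $8$ generated by $rh$ and $h$, where $rh$ has order $4$, $h$ has order $2$, and $h(rh)h^{-1}=(rh)^{-1}$; thus $G_{\ell,\ell}$ is isomorphic to the extraspecial group of order $2^5$ of $+$ type (the inner holomorph of the dihedral group of order $8$). \end{enumerate} Moreover, for any $t\in G_{\ell,\ell}$, any $f,g\in P_\ell$ and any real $p\ge1$, writing $(a,b)=t(f,g)$, \begin{align*} \|a\|_p\|b\|_p&=\|f\|_p\|g\|_p,\\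 \|ab\|_p&=\|fg\|_p,\\ \|a\widetilde{b}\|_p&=\|f\widetilde{g}\|_p,\\ \operatorname{Re}\int a\widetilde{a}\,\overline{b\widetilde{b}}&=\operatorname{Re}\int f\widetilde{f}\,\overline{g\widetilde{g}}. \end{align*}
   Context: For a polynomial $a(z)=a_0+\cdots+a_dz^d$ of degree $d$, its length is $1+d$ and $a^\dagger(z)=\overline{a_d}+\overline{a_{d-1}}z+\cdots+\overline{a_0}z^d$ (conjugate reciprocal). For a Laurent polynomial $a(z)=\sum_ja_jz^j$: $\widetilde{a}(z)=a(-z)$, $\overline{a(z)}=\sum_j\overline{a_j}z^{-j}$, $\int a$ is the constant coefficient $a_0=\frac{1}{2\pi}\int_0^{2\pi}a(e^{i\theta})d\theta$, and $\|a\|_p=\left(\frac{1}{2\pi}\int_0^{2\pi}|a(e^{i\theta})|^pd\theta\right)^{1/p}$. *)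

theory Defs
  imports "HOL-Analysis.Analysis" "HOL-Computational_Algebra.Polynomial"
    "HOL-Algebra.Bij" "HOL-Algebra.Generated_Groups" "HOL-Algebra.Multiplicative_Group"
begin

definition Pl :: "nat \<Rightarrow> complex poly set" where
  "Pl l = {f. Polynomial.degree f = l - 1 \<and> Polynomial.coeff f 0 \<noteq> 0}"

definition ptilde :: "complex poly \<Rightarrow> complex poly" where
  "ptilde f = pcompose f [:0, -1:]"

definition pdagger :: "complex poly \<Rightarrow> complex poly" where
  "pdagger f = map_poly cnj (reflect_poly f)"

definition smap :: "complex poly \<times> complex poly \<Rightarrow> complex poly \<times> complex poly" where
  "smap x = (snd x, fst x)"
definition nmap :: "complex poly \<times> complex poly \<Rightarrow> complex poly \<times> complex poly" where
  "nmap x = (- fst x, snd x)"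
definition hmap :: "complex poly \<times> complex poly \<Rightarrow> complex poly \<times> complex poly" where
  "hmap x = (ptilde (fst x), ptilde (snd x))"
definition rmap :: "complex poly \<times> complex poly \<Rightarrow> complex poly \<times> complex poly" where
  "rmap x = (pdagger (fst x), pdagger (snd x))"

text \<open>The generators as permutations of Pl l \<times> Pl l (restricted, as elements of BijGroup).\<close>
definition sG where "sG l = restrict smap (Pl l \<times> Pl l)"
definition nG where "nG l = restrict nmap (Pl l \<times> Pl l)"
definition hG where "hG l = restrict hmap (Pl l \<times> Pl l)"
definition rG where "rG l = restrict rmap (Pl l \<times> Pl l)"

definition Gll :: "nat \<Rightarrow> ((complex poly \<times> complex poly) \<Rightarrow> (complex poly \<times> complex poly)) monoid" where
  "Gll l = subgroup_generated (BijGroup (Pl l \<times> Pl l)) {sG l, nG l, hG l, rG l}"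

definition internal_direct_product2 :: "('a, 'b) monoid_scheme \<Rightarrow> 'a set \<Rightarrow> 'a set \<Rightarrow> bool" where
  "internal_direct_product2 G H K \<longleftrightarrow>
     H \<lhd> G \<and> K \<lhd> G \<and> H \<inter> K = {\<one>\<^bsub>G\<^esub>} \<and> H <#>\<^bsub>G\<^esub> K = carrier G"

definition internal_direct_product3 :: "('a, 'b) monoid_scheme \<Rightarrow> 'a set \<Rightarrow> 'a set \<Rightarrow> 'a set \<Rightarrow> bool" where
  "internal_direct_product3 G H K L \<longleftrightarrow>
     H \<lhd> G \<and> K \<lhd> G \<and> L \<lhd> G \<and>
     H \<inter> (K <#>\<^bsub>G\<^esub> L) = {\<one>\<^bsub>G\<^esub>} \<and>
     K \<inter> (H <#>\<^bsub>G\<^esub> L) = {\<one>\<^bsub>G\<^esub>} \<and>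
     L \<inter> (H <#>\<^bsub>G\<^esub> K) = {\<one>\<^bsub>G\<^esub>} \<and>
     H <#>\<^bsub>G\<^esub> K <#>\<^bsub>G\<^esub> L = carrier G"

definition internal_central_product :: "('a, 'b) monoid_scheme \<Rightarrow> 'a set \<Rightarrow> 'a set \<Rightarrow> bool" where
  "internal_central_product G H K \<longleftrightarrow>
     subgroup H G \<and> subgroup K G \<and>
     (\<forall>x\<in>H. \<forall>y\<in>K. x \<otimes>\<^bsub>G\<^esub> y = y \<otimes>\<^bsub>G\<^esub> x) \<and> H <#>\<^bsub>G\<^esub> K = carrier G"

text \<open>Inner holomorph of a group D: the permutation group of carrier D generated by all
  left and right translations (isomorphic to D \<rtimes> Inn D).\<close>
definition inner_holomorph :: "('a, 'b) monoid_scheme \<Rightarrow> ('a \<Rightarrow> 'a) monoid" where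
  "inner_holomorph D = subgroup_generated (BijGroup (carrier D))
     ((\<lambda>a. \<lambda>x\<in>carrier D. a \<otimes>\<^bsub>D\<^esub> x) ` carrier D \<union> (\<lambda>a. \<lambda>x\<in>carrier D. x \<otimes>\<^bsub>D\<^esub> a) ` carrier D)"

text \<open>The mean (1/2pi) times the integral over [0,2pi] of F(cis t); for a Laurent polynomial this is its constant coefficient.\<close>
definition circ_mean :: "(complex \<Rightarrow> complex) \<Rightarrow> complex" where
  "circ_mean F = complex_of_real (1 / (2 * pi)) * integral {0..2*pi} (\<lambda>\<theta>. F (cis \<theta>))"

definition lpnorm :: "real \<Rightarrow> complex poly \<Rightarrow> real" where
  "lpnorm p a = ((1 / (2 * pi)) * integral {0..2*pi} (\<lambda>\<theta>. norm (poly a (cis \<theta>)) powr p)) powr (1 / p)"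

end

theory Submission
  imports Defs
begin


lemma coeff_ptilde: "Polynomial.coeff (ptilde f) j = (-1)^j * Polynomial.coeff f j"
  unfolding ptilde_def by (simp add: coeff_pcompose_linear)

lemma poly_ptilde[simp]: "poly (ptilde f) x = poly f (-x)"
  unfolding ptilde_def by (simp add: poly_pcompose)

lemma ptilde_ptilde[simp]: "ptilde (ptilde f) = f"
  by (simp add: poly_eq_iff coeff_ptilde power_mult_distrib[symmetric])

lemma degree_ptilde[simp]: "Polynomial.degree (ptilde f) = Polynomial.degree f"
  unfolding ptilde_def by (simp add: degree_pcompose)

lemma ptilde_uminus[simp]: "ptilde (-f) = - ptilde f"
  by (simp add: poly_eq_iff coeff_ptilde)

lemma ptilde_smult: "ptilde (Polynomial.smult c f) = Polynomial.smult c (ptilde f)"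
  by (simp add: poly_eq_iff coeff_ptilde)

lemma ptilde_mult: "ptilde (f * g) = ptilde f * ptilde g"
  unfolding ptilde_def by (simp add: pcompose_mult)

lemma coeff_pdagger: "Polynomial.coeff (pdagger f) n = cnj (if n > Polynomial.degree f then 0 else Polynomial.coeff f (Polynomial.degree f - n))"
  unfolding pdagger_def by (simp add: coeff_map_poly coeff_reflect_poly)

lemma degree_pdagger: "Polynomial.coeff f 0 \<noteq> 0 \<Longrightarrow> Polynomial.degree (pdagger f) = Polynomial.degree f"
  unfolding pdagger_def
  by (subst map_poly_degree_eq) (auto simp: coeff_reflect_poly)

lemma coeff0_pdagger[simp]: "Polynomial.coeff (pdagger f) 0 = cnj (lead_coeff f)"
  by (simp add: coeff_pdagger)

lemma pdagger_pdagger: "Polynomial.coeff f 0 \<noteq> 0 \<Longrightarrow> pdagger (pdagger f) = f"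
  by (auto simp add: poly_eq_iff coeff_pdagger degree_pdagger coeff_eq_0)

lemma pdagger_uminus[simp]: "pdagger (-f) = - pdagger f"
  by (simp add: poly_eq_iff coeff_pdagger)

lemma pdagger_smult: "pdagger (Polynomial.smult c f) = Polynomial.smult (cnj c) (pdagger f)"
  by (cases "c = 0") (auto simp add: poly_eq_iff coeff_pdagger)

lemma neg1_pow_aux: "n \<le> m \<Longrightarrow> (-1::complex)^n = (-1)^m * (-1)^(m - n)"
proof -
  assume "n \<le> m"
  then obtain k where k: "m = n + k" using le_Suc_ex by blast
  have "(-1::complex)^k * (-1)^k = 1" by (simp add: power_mult_distrib[symmetric])
  then show ?thesis unfolding k by (simp add: power_add mult.assoc)
qed

lemma ptilde_pdagger: "Polynomial.coeff f 0 \<noteq> 0 \<Longrightarrow>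
   ptilde (pdagger f) = Polynomial.smult ((-1)^Polynomial.degree f) (pdagger (ptilde f))"
  by (auto simp add: poly_eq_iff coeff_pdagger coeff_ptilde degree_pdagger not_less neg1_pow_aux)

lemma Pl_iff: "f \<in> Pl l \<longleftrightarrow> Polynomial.degree f = l - 1 \<and> Polynomial.coeff f 0 \<noteq> 0"
  by (simp add: Pl_def)

lemma Pl_nz: "f \<in> Pl l \<Longrightarrow> f \<noteq> 0"
  by (auto simp: Pl_def)

lemma Pl_uminus: "f \<in> Pl l \<Longrightarrow> -f \<in> Pl l"
  by (simp add: Pl_def)

lemma Pl_ptilde: "f \<in> Pl l \<Longrightarrow> ptilde f \<in> Pl l"
  by (simp add: Pl_def coeff_ptilde)

lemma Pl_pdagger: "f \<in> Pl l \<Longrightarrow> pdagger f \<in> Pl l"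
  by (simp add: Pl_def degree_pdagger) (metis leading_coeff_0_iff coeff_0 degree_0 not_gr_zero)


type_synonym code = "bool \<times> bool \<times> bool \<times> bool \<times> bool"

definition ng :: "bool \<Rightarrow> complex poly \<Rightarrow> complex poly" where
  "ng e f = (if e then -f else f)"
definition Tm :: "bool \<Rightarrow> bool \<Rightarrow> complex poly \<Rightarrow> complex poly" where
  "Tm ht rt f = (if rt then pdagger (if ht then ptilde f else f) else (if ht then ptilde f else f))"

fun act :: "code \<Rightarrow> complex poly \<times> complex poly \<Rightarrow> complex poly \<times> complex poly" where
  "act (sw,e1,e2,ht,rt) (f,g) = (if sw then (ng e1 (Tm ht rt g), ng e2 (Tm ht rt f))
     else (ng e1 (Tm ht rt f), ng e2 (Tm ht rt g)))"

definition emap :: "nat \<Rightarrow> code \<Rightarrow> (complex poly \<times> complex poly \<Rightarrow> complex poly \<times> complex poly)" where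
  "emap l c = restrict (act c) (Pl l \<times> Pl l)"

fun cmul :: "nat \<Rightarrow> code \<Rightarrow> code \<Rightarrow> code" where
  "cmul l (sw1,a1,b1,h1,r1) (sw2,a2,b2,h2,r2) =
    (sw1 \<noteq> sw2, (a1 \<noteq> (if sw1 then b2 else a2)) \<noteq> (even l \<and> h1 \<and> r2),
      (b1 \<noteq> (if sw1 then a2 else b2)) \<noteq> (even l \<and> h1 \<and> r2), h1 \<noteq> h2, r1 \<noteq> r2)"

definition cinv :: "nat \<Rightarrow> code \<Rightarrow> code" where
  "cinv l c = cmul l c (cmul l c c)"

abbreviation "c0 \<equiv> (False,False,False,False,False)"

lemma cinv_l: "cmul l (cinv l c) c = c0"
  by (cases c) (auto simp: cinv_def)

lemma cinv_r: "cmul l c (cinv l c) = c0"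
  by (cases c) (auto simp: cinv_def)


lemma Pl_ng: "f \<in> Pl l \<Longrightarrow> ng e f \<in> Pl l"
  by (simp add: ng_def Pl_uminus)

lemma Pl_Tm: "f \<in> Pl l \<Longrightarrow> Tm h r f \<in> Pl l"
  by (simp add: Tm_def Pl_ptilde Pl_pdagger)

lemma act_Pl: "x \<in> Pl l \<times> Pl l \<Longrightarrow> act c x \<in> Pl l \<times> Pl l"
  by (cases c; cases x) (auto simp: Pl_ng Pl_Tm)

lemma Tm_ng: "Tm h r (ng e f) = ng e (Tm h r f)"
  by (simp add: Tm_def ng_def)

lemma ng_ng: "ng a (ng b f) = ng (a \<noteq> b) f"
  by (simp add: ng_def)

lemma ptilde_pdagger_Pl:
  assumes "f \<in> Pl l" "l > 0"
  shows "ptilde (pdagger f) = ng (even l) (pdagger (ptilde f))"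
proof -
  have d: "Polynomial.degree f = l - 1" "Polynomial.coeff f 0 \<noteq> 0" using assms by (auto simp: Pl_def)
  have "ptilde (pdagger f) = Polynomial.smult ((-1)^(l-1)) (pdagger (ptilde f))"
    using ptilde_pdagger[OF d(2)] d(1) by simp
  moreover have "(-1::complex)^(l-1) = (if even l then -1 else 1)"
    using assms by (cases l) auto
  ultimately show ?thesis by (simp add: ng_def)
qed

lemma Tm_Tm:
  assumes "f \<in> Pl l" "l > 0"
  shows "Tm h1 r1 (Tm h2 r2 f) = ng (even l \<and> h1 \<and> r2) (Tm (h1 \<noteq> h2) (r1 \<noteq> r2) f)"
proof -
  have c0: "Polynomial.coeff f 0 \<noteq> 0" "Polynomial.coeff (ptilde f) 0 \<noteq> 0" using assms by (auto simp: Pl_def coeff_ptilde)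
  have A: "ptilde (pdagger g) = ng (even l) (pdagger (ptilde g))" if "g \<in> Pl l" for g
    using ptilde_pdagger_Pl[OF that assms(2)] .
  have pt: "ptilde f \<in> Pl l" using Pl_ptilde[OF assms(1)] .
  show ?thesis
    using c0 A[OF assms(1)] A[OF pt] pdagger_pdagger[OF c0(1)] pdagger_pdagger[OF c0(2)]
    by (cases h1; cases r1; cases h2; cases r2) (auto simp: Tm_def ng_def)
qed

lemma act_mult:
  assumes "x \<in> Pl l \<times> Pl l" "l > 0"
  shows "act c1 (act c2 x) = act (cmul l c1 c2) x"
proof -
  obtain sw1 a1 b1 h1 r1 where c1: "c1 = (sw1,a1,b1,h1,r1)" by (cases c1) auto
  obtain sw2 a2 b2 h2 r2 where c2: "c2 = (sw2,a2,b2,h2,r2)" by (cases c2) auto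
  obtain f g where x: "x = (f,g)" "f \<in> Pl l" "g \<in> Pl l" using assms by auto
  show ?thesis
    unfolding c1 c2 x
    by (cases sw1; cases sw2) (auto simp: Tm_ng ng_ng Tm_Tm[OF x(2) assms(2)] Tm_Tm[OF x(3) assms(2)] intro!: arg_cong2[where f=ng])
qed

lemma act_c0: "act c0 x = x"
  by (cases x) (simp add: ng_def Tm_def)


abbreviation "PP l \<equiv> Pl l \<times> Pl l"
abbreviation "BG l \<equiv> BijGroup (PP l)"

lemma emap_Bij: assumes "l > 0" shows "emap l c \<in> Bij (PP l)"
proof -
  have "bij_betw (act c) (PP l) (PP l)"
  proof (rule bij_betw_byWitness[where f'="act (cinv l c)"])
    show "\<forall>x\<in>PP l. act (cinv l c) (act c x) = x"
      using act_mult[OF _ assms, of _ "cinv l c" c] cinv_l act_c0 by (simp only:) simp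
    show "\<forall>x\<in>PP l. act c (act (cinv l c) x) = x"
      using act_mult[OF _ assms, of _ c "cinv l c"] cinv_r act_c0 by (simp only:) simp
  qed (blast intro: act_Pl)+
  then have "bij_betw (emap l c) (PP l) (PP l)"
    unfolding emap_def by (rule bij_betw_cong[THEN iffD1, rotated]) auto
  then show ?thesis unfolding Bij_def emap_def by auto
qed

lemma emap_carrier: "l > 0 \<Longrightarrow> emap l c \<in> carrier (BG l)"
  by (simp add: BijGroup_def emap_Bij)

lemma emap_mult: assumes "l > 0"
  shows "emap l a \<otimes>\<^bsub>BG l\<^esub> emap l b = emap l (cmul l a b)"
  using emap_Bij[OF assms]
  by (auto simp add: BijGroup_def compose_def emap_def act_mult[OF _ assms] act_Pl simp del: act.simps cmul.simps)

lemma emap_one: "\<one>\<^bsub>BG l\<^esub> = emap l c0"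
  by (auto simp: BijGroup_def emap_def act_c0 simp del: act.simps)

lemma emap_inv: assumes "l > 0" shows "inv\<^bsub>BG l\<^esub> (emap l a) = emap l (cinv l a)"
  apply (rule group.inv_equality[OF group_BijGroup])
  using emap_mult[OF assms] emap_one emap_carrier[OF assms] cinv_l by auto

lemma range_emap_subgroup: assumes "l > 0" shows "subgroup (range (emap l)) (BG l)"
  apply (rule subgroup.intro)
  using emap_carrier[OF assms] emap_mult[OF assms] emap_one emap_inv[OF assms] by auto

lemma sG_emap: "sG l = emap l (True,False,False,False,False)"
  by (auto simp: sG_def emap_def smap_def ng_def Tm_def)
lemma nG_emap: "nG l = emap l (False,True,False,False,False)"
  by (auto simp: nG_def emap_def nmap_def ng_def Tm_def)
lemma hG_emap: "hG l = emap l (False,False,False,True,False)"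
  by (auto simp: hG_def emap_def hmap_def ng_def Tm_def)
lemma rG_emap: "rG l = emap l (False,False,False,False,True)"
  by (auto simp: rG_def emap_def rmap_def ng_def Tm_def)


definition "pw b c = (if b then c else c0)"

lemma emap_in_subgroup:
  assumes "l > 0" "subgroup X (BG l)" "emap l a \<in> X" "emap l b \<in> X"
  shows "emap l (cmul l a b) \<in> X"
  using subgroup.m_closed[OF assms(2) assms(3,4)] emap_mult[OF assms(1)] by simp

lemma emap_c0_in_subgroup: "subgroup X (BG l) \<Longrightarrow> emap l c0 \<in> X"
  using subgroup.one_closed emap_one by metis

lemma emap_pw_in_subgroup:
  "subgroup X (BG l) \<Longrightarrow> emap l c \<in> X \<Longrightarrow> emap l (pw b c) \<in> X"
  using emap_c0_in_subgroup by (auto simp: pw_def)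

lemma code_decomp:
  "cmul l (cmul l (cmul l (cmul l (pw e1 (False,True,False,False,False))
      (pw e2 (cmul l (cmul l (True,False,False,False,False) (False,True,False,False,False)) (True,False,False,False,False))))
      (pw r (False,False,False,False,True))) (pw h (False,False,False,True,False))) (pw sw (True,False,False,False,False))
   = (sw,e1,e2,h,r)"
  by (cases sw; cases e1; cases e2; cases h; cases r) (simp_all add: pw_def)

lemma carrier_G: assumes "l > 0" shows "carrier (Gll l) = range (emap l)"
proof -
  let ?S = "{sG l, nG l, hG l, rG l}"
  have S: "?S \<subseteq> carrier (BG l)" using emap_carrier[OF assms]
    by (simp add: sG_emap nG_emap hG_emap rG_emap)
  have "carrier (Gll l) = generate (BG l) ?S"
    unfolding Gll_def carrier_subgroup_generated using S by (simp add: Int_absorb1)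
  also have "\<dots> = range (emap l)"
  proof
    show "generate (BG l) ?S \<subseteq> range (emap l)"
      by (rule group.generate_subgroup_incl[OF group_BijGroup _ range_emap_subgroup[OF assms]])
        (auto simp: sG_emap nG_emap hG_emap rG_emap)
  next
    let ?X = "generate (BG l) ?S"
    have X: "subgroup ?X (BG l)" using group.generate_is_subgroup[OF group_BijGroup S] .
    have g: "emap l (True,False,False,False,False) \<in> ?X" "emap l (False,True,False,False,False) \<in> ?X"
      "emap l (False,False,False,True,False) \<in> ?X" "emap l (False,False,False,False,True) \<in> ?X"
      by (auto intro: generate.incl simp: sG_emap nG_emap hG_emap rG_emap)
    show "range (emap l) \<subseteq> ?X"
    proof clarify
      fix c :: code
      obtain sw e1 e2 h r where c: "c = (sw,e1,e2,h,r)" by (cases c) auto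
      show "emap l c \<in> ?X"
        unfolding c code_decomp[of l e1 e2 r h sw, symmetric]
        by (intro emap_in_subgroup[OF assms X] emap_pw_in_subgroup[OF X] g)
    qed
  qed
  finally show ?thesis .
qed

lemma group_G: "group (Gll l)"
  unfolding Gll_def by (rule group.group_subgroup_generated[OF group_BijGroup])

lemma mult_G: "mult (Gll l) = mult (BG l)"
  unfolding Gll_def by simp

lemma one_G: "\<one>\<^bsub>Gll l\<^esub> = emap l c0"
  unfolding Gll_def by (simp add: emap_one)

lemma emap_mult_G: "l > 0 \<Longrightarrow> emap l a \<otimes>\<^bsub>Gll l\<^esub> emap l b = emap l (cmul l a b)"
  by (simp add: mult_G emap_mult)

lemma emap_inv_G: assumes "l > 0" shows "inv\<^bsub>Gll l\<^esub> (emap l a) = emap l (cinv l a)"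
proof -
  have "emap l a \<in> carrier (Gll l)" using carrier_G[OF assms] by auto
  then show ?thesis unfolding Gll_def
    by (simp add: group.inv_subgroup_generated[OF group_BijGroup] emap_inv[OF assms])
qed

fun cpow :: "nat \<Rightarrow> code \<Rightarrow> nat \<Rightarrow> code" where
  "cpow l c 0 = c0"
| "cpow l c (Suc n) = cmul l (cpow l c n) c"

lemma emap_pow_G: assumes "l > 0" shows "emap l c [^]\<^bsub>Gll l\<^esub> n = emap l (cpow l c n)"
  by (induction n) (simp_all add: one_G emap_mult_G[OF assms] del: cmul.simps)

lemma generate_G: assumes "l > 0" "A \<subseteq> carrier (Gll l)"
  shows "generate (Gll l) A = generate (BG l) A"
proof -
  let ?S = "{sG l, nG l, hG l, rG l}"
  have "Gll l = (BG l)\<lparr>carrier := carrier (Gll l)\<rparr>"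
    unfolding Gll_def subgroup_generated_def by simp
  moreover have "subgroup (carrier (Gll l)) (BG l)"
    using carrier_G[OF assms(1)] range_emap_subgroup[OF assms(1)] by simp
  ultimately show ?thesis
    using group.generate_consistent[OF group_BijGroup assms(2)] by metis
qed

lemma (in group) ord_eqI:
  assumes "x \<in> carrier G" "x [^] k = \<one>" "k > 0" "\<And>j. 0 < j \<Longrightarrow> j < k \<Longrightarrow> x [^] j \<noteq> \<one>"
  shows "ord x = k"
proof -
  have d: "ord x dvd k" using assms pow_eq_id by blast
  then have "ord x > 0" using assms(3) by (cases "ord x") auto
  moreover have "x [^] ord x = \<one>" using assms(1) by simp
  moreover have "ord x \<le> k" using d assms(3) by (simp add: dvd_imp_le)
  ultimately show ?thesis using assms(4) by (cases "ord x < k") auto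
qed


definition uu :: "nat \<Rightarrow> complex poly" where "uu l = [:1:] + Polynomial.monom 1 (l - 1)"
definition ww :: "nat \<Rightarrow> complex poly" where "ww l = [:1,1:] + Polynomial.monom 1 (l - 1)"

lemma degree_eqI': "Polynomial.coeff p n \<noteq> 0 \<Longrightarrow> (\<And>i. i > n \<Longrightarrow> Polynomial.coeff p i = 0) \<Longrightarrow> Polynomial.degree p = n"
  by (meson degree_le le_antisym le_degree)

lemma uu_Pl: "uu l \<in> Pl l"
  unfolding Pl_def uu_def
  by (auto intro!: degree_eqI' simp: coeff_monom coeff_pCons split: nat.split nat.split_asm)

lemma ww_Pl: "l \<ge> 2 \<Longrightarrow> ww l \<in> Pl l"
  unfolding Pl_def ww_def
  by (auto intro!: degree_eqI' simp: coeff_monom coeff_pCons split: nat.split nat.split_asm)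

lemma poly_ww: "poly (ww l) x = 1 + x + x ^ (l - 1)"
  by (simp add: ww_def poly_monom)

lemma Pl_smult: "f \<in> Pl l \<Longrightarrow> c \<noteq> 0 \<Longrightarrow> Polynomial.smult c f \<in> Pl l"
  by (simp add: Pl_def)

lemma Tm_smult_r: "Tm h True (Polynomial.smult c f) = Polynomial.smult (cnj c) (Tm h True f)"
  by (simp add: Tm_def ptilde_smult pdagger_smult)

lemma ng_uminus: "ng e (- f) = - ng e f"
  by (simp add: ng_def)

lemma ng_smult: "ng e (Polynomial.smult c f) = Polynomial.smult c (ng e f)"
  by (simp add: ng_def)

definition NN :: "nat \<Rightarrow> complex poly \<Rightarrow> real" where
  "NN l x = norm (Polynomial.coeff x 0) + norm (Polynomial.coeff x (l - 1))"

lemma NN_ng: "NN l (ng e x) = NN l x"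
  by (simp add: NN_def ng_def)

lemma NN_ptilde: "NN l (ptilde x) = NN l x"
  by (simp add: NN_def coeff_ptilde norm_mult norm_power)

lemma NN_pdagger: "x \<in> Pl l \<Longrightarrow> NN l (pdagger x) = NN l x"
  by (simp add: NN_def coeff_pdagger Pl_def)

lemma NN_Tm: "x \<in> Pl l \<Longrightarrow> NN l (Tm h r x) = NN l x"
  by (simp add: Tm_def NN_ptilde NN_pdagger Pl_ptilde)

lemma NN_smult: "NN l (Polynomial.smult c x) = norm c * NN l x"
  by (simp add: NN_def norm_mult algebra_simps)

lemma NN_pos: "x \<in> Pl l \<Longrightarrow> NN l x > 0"
  by (simp add: NN_def Pl_def add_pos_nonneg)

lemma single:
  assumes "l > 0" "\<forall>f\<in>Pl l. ng e (Tm h r f) = f"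
  shows "\<not> e \<and> \<not> r \<and> (h \<longrightarrow> l = 1)"
proof -
  have u: "uu l \<in> Pl l" by (rule uu_Pl)
  have nr: "\<not> r"
  proof
    assume r: r
    have v: "Polynomial.smult \<i> (uu l) \<in> Pl l" using Pl_smult[OF u] by simp
    have "Polynomial.smult \<i> (uu l) = ng e (Tm h r (Polynomial.smult \<i> (uu l)))"
      using assms(2) v by simp
    also have "\<dots> = Polynomial.smult (- \<i>) (ng e (Tm h r (uu l)))"
      using r by (simp add: Tm_smult_r ng_smult ng_uminus)
    also have "\<dots> = Polynomial.smult (- \<i>) (uu l)" using assms(2) u by simp
    finally have "Polynomial.coeff (Polynomial.smult \<i> (uu l)) 0 = Polynomial.coeff (Polynomial.smult (- \<i>) (uu l)) 0"
      by (simp only:)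
    then show False using u by (simp add: Pl_def)
  qed
  have ne: "\<not> e"
  proof
    assume e: e
    have "Polynomial.coeff (ng e (Tm h r (uu l))) 0 = - Polynomial.coeff (uu l) 0"
      using nr e by (simp add: ng_def Tm_def coeff_ptilde)
    then have "Polynomial.coeff (uu l) 0 = - Polynomial.coeff (uu l) 0" using assms(2) u by simp
    then show False using u by (simp add: Pl_def)
  qed
  have "l = 1" if h: h
  proof (rule ccontr)
    assume "l \<noteq> 1"
    then have l2: "l \<ge> 2" using assms(1) by simp
    have "ptilde (ww l) = ww l" using assms(2) ww_Pl[OF l2] nr ne h by (simp add: ng_def Tm_def)
    then have "poly (ww l) (-1) = poly (ww l) 1" by (metis poly_ptilde)
    then have "1 + (-1) + (-1::complex)^(l-1) = 3" by (simp add: poly_ww)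
    then have "norm ((-1::complex)^(l-1)) = 3" by simp
    then show False by (simp add: norm_power)
  qed
  then show ?thesis using nr ne by blast
qed

lemma emap_c0:
  assumes "l > 0" "emap l c = emap l c0"
  shows "c = c0 \<or> (l = 1 \<and> c = (False,False,False,True,False))"
proof -
  obtain sw e1 e2 h r where c: "c = (sw,e1,e2,h,r)" by (cases c) auto
  have act: "act c x = x" if "x \<in> PP l" for x
    using fun_cong[OF assms(2), of x] that by (simp add: emap_def act_c0 del: act.simps)
  have u: "uu l \<in> Pl l" by (rule uu_Pl)
  have nsw: "\<not> sw"
  proof
    assume sw
    have u2: "Polynomial.smult 2 (uu l) \<in> Pl l" using Pl_smult[OF u] by simp
    have "ng e1 (Tm h r (Polynomial.smult 2 (uu l))) = uu l"
      using act[of "(uu l, Polynomial.smult 2 (uu l))"] u u2 \<open>sw\<close> c by simp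
    then have "NN l (Polynomial.smult 2 (uu l)) = NN l (uu l)"
      using NN_ng NN_Tm[OF u2] by metis
    then show False using NN_smult[of l 2 "uu l"] NN_pos[OF u] by simp
  qed
  have 1: "\<forall>f\<in>Pl l. ng e1 (Tm h r f) = f" using act u nsw c by auto
  have 2: "\<forall>f\<in>Pl l. ng e2 (Tm h r f) = f" using act u nsw c by auto
  show ?thesis using single[OF assms(1) 1] single[OF assms(1) 2] nsw c by auto
qed

definition cht :: "code \<Rightarrow> bool" where "cht c = fst (snd (snd (snd c)))"

lemma cinv_expl: "cinv l (sw,e1,e2,h,r) = (sw, ((if sw then e2 else e1) \<noteq> (even l \<and> h \<and> r)), ((if sw then e1 else e2) \<noteq> (even l \<and> h \<and> r)), h, r)"
  by (cases sw; cases e1; cases e2; cases h; cases r) (simp_all add: cinv_def)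

lemma code_cancel: "cmul l a (cinv l b) = c0 \<Longrightarrow> a = b"
  apply (cases a; cases b)
  apply (simp only: cinv_expl)
  apply (simp split: if_splits)
  apply auto
  done

lemma code_cancel_h: "cmul l a (cinv l b) = (False,False,False,True,False) \<Longrightarrow> cht a \<noteq> cht b"
  apply (cases a; cases b)
  apply (simp only: cinv_expl)
  apply (simp split: if_splits add: cht_def)
  done

lemma emap_inj:
  assumes "l > 0" "emap l c1 = emap l c2" "l \<ge> 2 \<or> cht c1 = cht c2"
  shows "c1 = c2"
proof -
  have "emap l (cmul l c1 (cinv l c2)) = emap l c0"
    using emap_mult[OF assms(1), of c1 "cinv l c2"] emap_mult[OF assms(1), of c2 "cinv l c2"] assms(2) cinv_r
    by metis
  from emap_c0[OF assms(1) this] have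
    "cmul l c1 (cinv l c2) = c0 \<or> (l = 1 \<and> cmul l c1 (cinv l c2) = (False,False,False,True,False))" .
  moreover have "\<not> (l = 1 \<and> cmul l c1 (cinv l c2) = (False,False,False,True,False))"
    using assms(3) code_cancel_h[of l c1 c2] by auto
  ultimately show ?thesis using code_cancel[of l c1 c2] by blast
qed

lemma emap_l1: "emap 1 (sw,a,b,True,r) = emap 1 (sw,a,b,False,r)"
proof -
  have "ptilde f = f" if "f \<in> Pl 1" for f
  proof -
    have "Polynomial.coeff (ptilde f) n = Polynomial.coeff f n" for n
      by (cases n) (use that in \<open>auto simp: coeff_ptilde Pl_def coeff_eq_0\<close>)
    then show ?thesis by (simp add: poly_eq_iff)
  qed
  then show ?thesis by (auto simp: emap_def Tm_def)
qed


abbreviation "cs \<equiv> (True,False,False,False,False)"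
abbreviation "cn \<equiv> (False,True,False,False,False)"
abbreviation "ch \<equiv> (False,False,False,True,False)"
abbreviation "cr \<equiv> (False,False,False,False,True)"
abbreviation "cz \<equiv> (False,True,True,False,False)"

definition "CD = {(False,False,False,False,False), (False,True,False,False,False),
  (False,False,True,False,False), (False,True,True,False,False),
  (True,False,False,False,False), (True,True,False,False,False),
  (True,False,True,False,False), (True,True,True,False,False)}"

definition "CDel = {(False,False,False,False,False), (False,True,True,False,False),
  (False,False,False,True,False), (False,True,True,True,False),
  (False,False,False,False,True), (False,True,True,False,True),
  (False,False,False,True,True), (False,True,True,True,True)}"

lemma subgroup_codes:
  assumes "l > 0" "c0 \<in> C" "\<forall>a\<in>C. \<forall>b\<in>C. cmul l a b \<in> C" "\<forall>a\<in>C. cinv l a \<in> C"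
  shows "subgroup (emap l ` C) (Gll l)"
  apply (rule subgroup.intro)
  using assms carrier_G[OF assms(1)] emap_mult_G[OF assms(1)] one_G emap_inv_G[OF assms(1)]
  by (auto simp del: cmul.simps)

lemma generate_codes:
  assumes "l > 0" "subgroup (emap l ` C) (Gll l)" "A \<subseteq> emap l ` C" "emap l ` C \<subseteq> generate (Gll l) A"
  shows "generate (Gll l) A = emap l ` C"
  using group.generate_subgroup_incl[OF group_G assms(3,2)] assms(4) by blast

lemma in_gen_mult:
  assumes "l > 0" "A \<subseteq> carrier (Gll l)" "emap l a \<in> generate (Gll l) A" "emap l b \<in> generate (Gll l) A"
  shows "emap l (cmul l a b) \<in> generate (Gll l) A"
  using subgroup.m_closed[OF group.generate_is_subgroup[OF group_G assms(2)] assms(3,4)]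
    emap_mult_G[OF assms(1)] by simp

lemma in_gen_pw:
  assumes "l > 0" "A \<subseteq> carrier (Gll l)" "emap l a \<in> generate (Gll l) A"
  shows "emap l (pw b a) \<in> generate (Gll l) A"
  using assms generate.one[of "Gll l" A] one_G by (auto simp: pw_def)

lemma ns_code: "l > 0 \<Longrightarrow> nG l \<otimes>\<^bsub>Gll l\<^esub> sG l = emap l (True,True,False,False,False)"
  by (simp add: nG_emap sG_emap mult_G emap_mult)
lemma rh_code: "l > 0 \<Longrightarrow> rG l \<otimes>\<^bsub>Gll l\<^esub> hG l = emap l (False,False,False,True,True)"
  by (simp add: rG_emap hG_emap mult_G emap_mult)

lemma CD_closed: "c0 \<in> CD" "\<forall>a\<in>CD. \<forall>b\<in>CD. cmul l a b \<in> CD" "\<forall>a\<in>CD. cinv l a \<in> CD"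
  by (simp_all add: CD_def cinv_expl)

lemma CDel_closed: "c0 \<in> CDel" "\<forall>a\<in>CDel. \<forall>b\<in>CDel. cmul l a b \<in> CDel" "\<forall>a\<in>CDel. cinv l a \<in> CDel"
  by (simp_all add: CDel_def cinv_expl)

lemma D_gen:
  assumes "l > 0"
  shows "generate (Gll l) {nG l \<otimes>\<^bsub>Gll l\<^esub> sG l, sG l} = emap l ` CD"
proof (rule generate_codes[OF assms subgroup_codes[OF assms CD_closed]])
  let ?A = "{nG l \<otimes>\<^bsub>Gll l\<^esub> sG l, sG l}"
  show "?A \<subseteq> emap l ` CD" by (simp only: ns_code[OF assms]) (auto simp: sG_emap CD_def)
  have A: "?A \<subseteq> carrier (Gll l)" using carrier_G[OF assms] by (simp only: ns_code[OF assms]) (auto simp: sG_emap)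
  have g1: "emap l (True,True,False,False,False) \<in> generate (Gll l) ?A"
    by (simp only: ns_code[OF assms]) (rule generate.incl, simp)
  have g2: "emap l cs \<in> generate (Gll l) ?A"
    by (rule generate.incl) (simp add: sG_emap)
  note M = in_gen_mult[OF assms A] and W = in_gen_pw[OF assms A]
  have gn: "emap l cn \<in> generate (Gll l) ?A" using M[OF g1 g2] by simp
  have gn2: "emap l (False,False,True,False,False) \<in> generate (Gll l) ?A"
    using M[OF M[OF g2 gn] g2] by simp
  have dec: "cmul l (cmul l (pw a cn) (pw b (False,False,True,False,False))) (pw sw cs) = (sw,a,b,False,False)"
    for a b sw by (cases a; cases b; cases sw) (simp_all add: pw_def)
  show "emap l ` CD \<subseteq> generate (Gll l) ?A"
  proof clarify
    fix c assume "c \<in> CD"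
    then obtain sw a b where c: "c = (sw,a,b,False,False)" by (auto simp: CD_def)
    show "emap l c \<in> generate (Gll l) ?A"
      unfolding c dec[of a b sw, symmetric] by (intro M W gn gn2 g2)
  qed
qed

lemma Del_gen:
  assumes "l > 0" "even l"
  shows "generate (Gll l) {rG l \<otimes>\<^bsub>Gll l\<^esub> hG l, hG l} = emap l ` CDel"
proof (rule generate_codes[OF assms(1) subgroup_codes[OF assms(1) CDel_closed]])
  let ?A = "{rG l \<otimes>\<^bsub>Gll l\<^esub> hG l, hG l}"
  show "?A \<subseteq> emap l ` CDel" by (simp only: rh_code[OF assms(1)]) (auto simp: hG_emap CDel_def)
  have A: "?A \<subseteq> carrier (Gll l)" using carrier_G[OF assms(1)] by (simp only: rh_code[OF assms(1)]) (auto simp: hG_emap)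
  have g1: "emap l (False,False,False,True,True) \<in> generate (Gll l) ?A"
    by (simp only: rh_code[OF assms(1)]) (rule generate.incl, simp)
  have g2: "emap l ch \<in> generate (Gll l) ?A"
    by (rule generate.incl) (simp add: hG_emap)
  note M = in_gen_mult[OF assms(1) A] and W = in_gen_pw[OF assms(1) A]
  have gr: "emap l cr \<in> generate (Gll l) ?A" using M[OF g1 g2] by simp
  have gz: "emap l cz \<in> generate (Gll l) ?A"
    using M[OF g1 g1] assms(2) by simp
  have dec: "cmul l (cmul l (pw e cz) (pw r cr)) (pw h ch) = (False,e,e,h,r)"
    for e h r by (cases e; cases h; cases r) (simp_all add: pw_def)
  show "emap l ` CDel \<subseteq> generate (Gll l) ?A"
  proof clarify
    fix c assume "c \<in> CDel"
    then obtain e h r where c: "c = (False,e,e,h,r)" by (auto simp: CDel_def)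
    show "emap l c \<in> generate (Gll l) ?A"
      unfolding c dec[of e r h, symmetric] by (intro M W gz gr g2)
  qed
qed


lemma emap_neq: "l > 0 \<Longrightarrow> (l \<ge> 2 \<or> cht a = cht b) \<Longrightarrow> a \<noteq> b \<Longrightarrow> emap l a \<noteq> emap l b"
  using emap_inj by blast

lemma set_mult_emap:
  assumes "l > 0"
  shows "emap l ` A <#>\<^bsub>Gll l\<^esub> emap l ` B = emap l ` {cmul l a b | a b. a \<in> A \<and> b \<in> B}"
proof (intro equalityI subsetI)
    fix x assume "x \<in> emap l ` A <#>\<^bsub>Gll l\<^esub> emap l ` B"
    then obtain a b where "a \<in> A" "b \<in> B" "x = emap l a \<otimes>\<^bsub>Gll l\<^esub> emap l b"
      unfolding set_mult_def by blast
    then show "x \<in> emap l ` {cmul l a b | a b. a \<in> A \<and> b \<in> B}"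
      using emap_mult_G[OF assms] by blast
  next
    fix x assume "x \<in> emap l ` {cmul l a b | a b. a \<in> A \<and> b \<in> B}"
    then obtain a b where "a \<in> A" "b \<in> B" "x = emap l (cmul l a b)" by blast
    then show "x \<in> emap l ` A <#>\<^bsub>Gll l\<^esub> emap l ` B"
      using emap_mult_G[OF assms, of a b] unfolding set_mult_def by blast
qed

lemma normal_codes:
  assumes "l > 0" "subgroup (emap l ` C) (Gll l)" "\<And>c d. d \<in> C \<Longrightarrow> cmul l (cmul l c d) (cinv l c) \<in> C"
  shows "emap l ` C \<lhd> Gll l"
  unfolding group.normal_inv_iff[OF group_G]
  using assms carrier_G[OF assms(1)] emap_mult_G[OF assms(1)] emap_inv_G[OF assms(1)]
  by (auto simp del: cmul.simps)

lemma inj_emap_l2: "l \<ge> 2 \<Longrightarrow> inj_on (emap l) S"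
  using emap_inj[of l] by (intro inj_onI) auto

lemma inj_emap_nh: assumes "l > 0" "S \<subseteq> {c. \<not> cht c}" shows "inj_on (emap l) S"
proof (rule inj_onI)
  fix x y assume xy: "x \<in> S" "y \<in> S" "emap l x = emap l y"
  have "\<not> cht x" "\<not> cht y" using assms(2) xy by blast+
  then have "cht x = cht y" by simp
  then show "x = y" using emap_inj[OF assms(1) xy(3)] by blast
qed

lemma cmul_c0_left[simp]: "cmul l c0 c = c" by (cases c) simp
lemma cmul_c0_right[simp]: "cmul l c c0 = c" by (cases c) simp
lemma cinv_c0[simp]: "cinv l c0 = c0" by (simp add: cinv_def)

lemma gen1_codes:
  assumes "l > 0" "cmul l c c = c0" "cinv l c = c"
  shows "generate (Gll l) {emap l c} = emap l ` {c0, c}"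
proof (rule generate_codes[OF assms(1) subgroup_codes[OF assms(1)]])
  show "emap l ` {c0, c} \<subseteq> generate (Gll l) {emap l c}"
    using generate.one[of "Gll l" "{emap l c}"] generate.incl[of "emap l c" "{emap l c}" "Gll l"]
    by (auto simp: one_G)
qed (use assms in \<open>simp_all del: cmul.simps\<close>)

lemma cpow_num: "cpow l c 2 = cmul l (cmul l c0 c) c" "cpow l c 3 = cmul l (cmul l (cmul l c0 c) c) c"
  "cpow l c 4 = cmul l (cmul l (cmul l (cmul l c0 c) c) c) c" "cpow l c 1 = cmul l c0 c"
  by (simp_all add: eval_nat_numeral del: cmul.simps)

lemma ord_emap:
  assumes "l > 0" "emap l (cpow l c k) = emap l c0" "k > 0" "\<And>j. 0 < j \<Longrightarrow> j < k \<Longrightarrow> emap l (cpow l c j) \<noteq> emap l c0"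
  shows "group.ord (Gll l) (emap l c) = k"
  apply (rule group.ord_eqI[OF group_G])
  using assms carrier_G[OF assms(1)] by (auto simp: emap_pow_G one_G)

lemma less4: "(j::nat) > 0 \<Longrightarrow> j < 4 \<Longrightarrow> j = 1 \<or> j = 2 \<or> j = 3" by auto
lemma less2: "(j::nat) > 0 \<Longrightarrow> j < 2 \<Longrightarrow> j = 1" by auto

lemma ord4_emap:
  assumes "l > 0" "cpow l c 4 = c0" "cpow l c 1 \<noteq> c0" "cpow l c 2 \<noteq> c0" "cpow l c 3 \<noteq> c0"
    "l \<ge> 2 \<or> (cht (cpow l c 1) = False \<and> cht (cpow l c 2) = False \<and> cht (cpow l c 3) = False)"
  shows "group.ord (Gll l) (emap l c) = 4"
proof (rule ord_emap[OF assms(1)])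
  have c0h: "cht c0 = False" by (simp add: cht_def)
  show "emap l (cpow l c j) \<noteq> emap l c0" if "0 < j" "j < 4" for j
  proof -
    have j: "j = 1 \<or> j = 2 \<or> j = 3" using less4 that by blast
    have "cpow l c j \<noteq> c0" "l \<ge> 2 \<or> cht (cpow l c j) = cht c0" using j assms c0h by auto
    then show ?thesis using emap_neq[OF assms(1)] by blast
  qed
qed (use assms in auto)

lemma ord2_emap:
  assumes "l > 0" "cpow l c 2 = c0" "cpow l c 1 \<noteq> c0" "l \<ge> 2 \<or> cht (cpow l c 1) = False"
  shows "group.ord (Gll l) (emap l c) = 2"
proof (rule ord_emap[OF assms(1)])
  have c0h: "cht c0 = False" by (simp add: cht_def)
  show "emap l (cpow l c j) \<noteq> emap l c0" if "0 < j" "j < 2" for j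
  proof -
    have j: "j = 1" using less2 that by blast
    have "cpow l c j \<noteq> c0" "l \<ge> 2 \<or> cht (cpow l c j) = cht c0" using j assms c0h by auto
    then show ?thesis using emap_neq[OF assms(1)] by blast
  qed
qed (use assms in auto)


lemma CD_nh: "CD \<subseteq> {c. \<not> cht c}" by (auto simp: CD_def cht_def)
lemma cardCD: "card CD = 8" by (simp add: CD_def)
lemma cardCDel: "card CDel = 8" by (simp add: CDel_def)

lemma part_D:
  assumes "l > 0"
  defines "ns \<equiv> nG l \<otimes>\<^bsub>Gll l\<^esub> sG l"
  shows "card (generate (Gll l) {ns, sG l}) = 8 \<and> group.ord (Gll l) ns = 4 \<and> group.ord (Gll l) (sG l) = 2 \<and>
     sG l \<otimes>\<^bsub>Gll l\<^esub> ns \<otimes>\<^bsub>Gll l\<^esub> inv\<^bsub>Gll l\<^esub> (sG l) = inv\<^bsub>Gll l\<^esub> ns"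
proof (intro conjI)
  have ns: "ns = emap l (True,True,False,False,False)" unfolding ns_def using ns_code[OF assms(1)] .
  show "card (generate (Gll l) {ns, sG l}) = 8"
    unfolding ns_def D_gen[OF assms(1)] using card_image[OF inj_emap_nh[OF assms(1) CD_nh]] cardCD by simp
  show "group.ord (Gll l) ns = 4" unfolding ns
    by (rule ord4_emap[OF assms(1)]) (simp_all add: cpow_num cht_def)
  show "group.ord (Gll l) (sG l) = 2" unfolding sG_emap
    by (rule ord2_emap[OF assms(1)]) (simp_all add: cpow_num cht_def)
  show "sG l \<otimes>\<^bsub>Gll l\<^esub> ns \<otimes>\<^bsub>Gll l\<^esub> inv\<^bsub>Gll l\<^esub> (sG l) = inv\<^bsub>Gll l\<^esub> ns"
    unfolding ns sG_emap by (simp add: emap_mult_G[OF assms(1)] emap_inv_G[OF assms(1)] cinv_expl)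
qed

lemma conj_CD: "d \<in> CD \<Longrightarrow> cmul l (cmul l c d) (cinv l c) \<in> CD"
  by (cases c) (auto simp: CD_def cinv_expl)

lemma conj_R: "odd l \<Longrightarrow> d \<in> {c0, cr} \<Longrightarrow> cmul l (cmul l c d) (cinv l c) \<in> {c0, cr}"
  by (cases c) (auto simp: cinv_expl)

lemma conj_H: "odd l \<Longrightarrow> d \<in> {c0, ch} \<Longrightarrow> cmul l (cmul l c d) (cinv l c) \<in> {c0, ch}"
  by (cases c) (auto simp: cinv_expl)

lemma D_normal: "l > 0 \<Longrightarrow> emap l ` CD \<lhd> Gll l"
  by (rule normal_codes[OF _ subgroup_codes[OF _ CD_closed]]) (auto intro: conj_CD)

lemma R_gen: "l > 0 \<Longrightarrow> generate (Gll l) {rG l} = emap l ` {c0, cr}"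
  unfolding rG_emap by (rule gen1_codes) (auto simp: cinv_expl)

lemma H_gen: "l > 0 \<Longrightarrow> generate (Gll l) {hG l} = emap l ` {c0, ch}"
  unfolding hG_emap by (rule gen1_codes) (auto simp: cinv_expl)

lemma R_normal: "l > 0 \<Longrightarrow> odd l \<Longrightarrow> emap l ` {c0, cr} \<lhd> Gll l"
  by (rule normal_codes[OF _ subgroup_codes]) (auto intro: conj_R simp: cinv_expl split: if_splits)

lemma H_normal: "l > 0 \<Longrightarrow> odd l \<Longrightarrow> emap l ` {c0, ch} \<lhd> Gll l"
  by (rule normal_codes[OF _ subgroup_codes]) (auto intro: conj_H simp: cinv_expl split: if_splits)

lemma part_l1:
  assumes "l = 1"
  defines "ns \<equiv> nG l \<otimes>\<^bsub>Gll l\<^esub> sG l"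
  shows "group.ord (Gll l) (rG l) = 2 \<and>
        internal_direct_product2 (Gll l) (generate (Gll l) {ns, sG l}) (generate (Gll l) {rG l})"
proof -
  have l0: "l > 0" using assms by simp
  have ord: "group.ord (Gll l) (rG l) = 2" unfolding rG_emap
    by (rule ord2_emap[OF l0]) (simp_all add: cpow_num cht_def)
  have int: "emap l ` CD \<inter> emap l ` {c0, cr} = {\<one>\<^bsub>Gll l\<^esub>}"
  proof -
    have "emap l ` CD \<inter> emap l ` {c0, cr} = emap l ` (CD \<inter> {c0, cr})"
      by (rule inj_on_image_Int[OF inj_emap_nh[OF l0, of "CD \<union> {c0, cr}"], symmetric])
        (auto simp: CD_def cht_def)
    also have "CD \<inter> {c0, cr} = {c0}" by (auto simp: CD_def)
    finally show ?thesis by (simp add: one_G)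
  qed
  have prod: "emap l ` CD <#>\<^bsub>Gll l\<^esub> emap l ` {c0, cr} = carrier (Gll l)"
    unfolding set_mult_emap[OF l0] carrier_G[OF l0]
  proof (intro equalityI subsetI)
    fix x assume "x \<in> range (emap l)"
    then obtain sw a b h r where x: "x = emap l (sw,a,b,h,r)" by (metis rangeE prod_cases5)
    have x': "x = emap l (sw,a,b,False,r)" unfolding x using assms emap_l1 by (cases h) auto
    have "(sw,a,b,False,r) = cmul l (sw,a,b,False,False) (if r then cr else c0)" by (cases r) simp_all
    moreover have "(sw,a,b,False,False) \<in> CD" by (cases sw; cases a; cases b) (simp_all add: CD_def)
    ultimately show "x \<in> emap l ` {cmul l a b |a b. a \<in> CD \<and> b \<in> {c0, cr}}"
      unfolding x' by (intro imageI CollectI exI[of _ "(sw,a,b,False,False)"] exI[of _ "if r then cr else c0"]) auto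
  qed auto
  show ?thesis
    unfolding internal_direct_product2_def ns_def D_gen[OF l0] R_gen[OF l0]
    using ord int prod D_normal[OF l0] R_normal[OF l0] assms by simp
qed


lemma all_codes: "c \<in> range (emap l) \<Longrightarrow> \<exists>sw a b h r. c = emap l (sw,a,b,h,r)"
  by (metis rangeE prod_cases5)

lemma set2: "{f a b |a b. a \<in> A \<and> b \<in> {u, v}} = (\<lambda>a. f a u) ` A \<union> (\<lambda>a. f a v) ` A"
  by blast

lemma part_odd:
  assumes "odd l" "l > 1"
  defines "ns \<equiv> nG l \<otimes>\<^bsub>Gll l\<^esub> sG l"
  shows "group.ord (Gll l) (hG l) = 2 \<and> group.ord (Gll l) (rG l) = 2 \<and>
        internal_direct_product3 (Gll l) (generate (Gll l) {ns, sG l}) (generate (Gll l) {hG l}) (generate (Gll l) {rG l})"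
proof -
  have l0: "l > 0" and l2: "l \<ge> 2" using assms by auto
  have ordh: "group.ord (Gll l) (hG l) = 2" unfolding hG_emap
    by (rule ord2_emap[OF l0]) (simp_all add: cpow_num l2)
  have ordr: "group.ord (Gll l) (rG l) = 2" unfolding rG_emap
    by (rule ord2_emap[OF l0]) (simp_all add: cpow_num l2)
  note inj = inj_emap_l2[OF l2, of UNIV]
  have I: "emap l ` A \<inter> emap l ` B = emap l ` (A \<inter> B)" for A B
    using inj_on_image_Int[OF inj] by blast
  note SM = set_mult_emap[OF l0]
  have i1: "emap l ` CD \<inter> (emap l ` {c0, ch} <#>\<^bsub>Gll l\<^esub> emap l ` {c0, cr}) = {\<one>\<^bsub>Gll l\<^esub>}"
  proof -
    have "CD \<inter> {cmul l a b |a b. a \<in> {c0, ch} \<and> b \<in> {c0, cr}} = {c0}" unfolding set2 using assms(1) by (simp add: CD_def)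
    then show ?thesis unfolding SM I by (simp add: one_G)
  qed
  have i2: "emap l ` {c0, ch} \<inter> (emap l ` CD <#>\<^bsub>Gll l\<^esub> emap l ` {c0, cr}) = {\<one>\<^bsub>Gll l\<^esub>}"
  proof -
    have "{c0, ch} \<inter> {cmul l a b |a b. a \<in> CD \<and> b \<in> {c0, cr}} = {c0}" unfolding set2 using assms(1) by (simp add: CD_def)
    then show ?thesis unfolding SM I by (simp add: one_G)
  qed
  have i3: "emap l ` {c0, cr} \<inter> (emap l ` CD <#>\<^bsub>Gll l\<^esub> emap l ` {c0, ch}) = {\<one>\<^bsub>Gll l\<^esub>}"
  proof -
    have "{c0, cr} \<inter> {cmul l a b |a b. a \<in> CD \<and> b \<in> {c0, ch}} = {c0}" unfolding set2 using assms(1) by (simp add: CD_def)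
    then show ?thesis unfolding SM I by (simp add: one_G)
  qed
  have prod: "emap l ` CD <#>\<^bsub>Gll l\<^esub> emap l ` {c0, ch} <#>\<^bsub>Gll l\<^esub> emap l ` {c0, cr} = carrier (Gll l)"
    unfolding SM carrier_G[OF l0]
  proof (intro equalityI subsetI)
    fix x assume "x \<in> range (emap l)"
    then obtain sw a b h r where x: "x = emap l (sw,a,b,h,r)" using all_codes by blast
    have "(sw,a,b,h,r) = cmul l (cmul l (sw,a,b,False,False) (if h then ch else c0)) (if r then cr else c0)"
      using assms(1) by (cases h; cases r) simp_all
    moreover have cd: "(sw,a,b,False,False) \<in> CD" by (cases sw; cases a; cases b) (simp_all add: CD_def)
    moreover have "cmul l (sw,a,b,False,False) (if h then ch else c0) \<in> {cmul l a b |a b. a \<in> CD \<and> b \<in> {c0, ch}}"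
      by (intro CollectI exI conjI) (rule refl | rule cd | simp)+
    ultimately have "(sw,a,b,h,r) \<in> {cmul l a b |a b. a \<in> {cmul l a b |a b. a \<in> CD \<and> b \<in> {c0, ch}} \<and> b \<in> {c0, cr}}"
      by (intro CollectI exI conjI) (rule refl | assumption | simp)+
    then show "x \<in> emap l ` {cmul l a b |a b. a \<in> {cmul l a b |a b. a \<in> CD \<and> b \<in> {c0, ch}} \<and> b \<in> {c0, cr}}"
      unfolding x by (rule imageI)
  qed auto
  show ?thesis
    unfolding internal_direct_product3_def ns_def D_gen[OF l0] R_gen[OF l0] H_gen[OF l0]
    using ordh ordr i1 i2 i3 prod D_normal[OF l0] R_normal[OF l0 assms(1)] H_normal[OF l0 assms(1)] by simp
qed

lemma part_even:
  assumes "even l" "l > 0"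
  defines "ns \<equiv> nG l \<otimes>\<^bsub>Gll l\<^esub> sG l"
    and "rh \<equiv> rG l \<otimes>\<^bsub>Gll l\<^esub> hG l"
  shows "card (generate (Gll l) {rh, hG l}) = 8 \<and>
        group.ord (Gll l) rh = 4 \<and> group.ord (Gll l) (hG l) = 2 \<and>
        hG l \<otimes>\<^bsub>Gll l\<^esub> rh \<otimes>\<^bsub>Gll l\<^esub> inv\<^bsub>Gll l\<^esub> (hG l) = inv\<^bsub>Gll l\<^esub> rh \<and>
        internal_central_product (Gll l) (generate (Gll l) {ns, sG l}) (generate (Gll l) {rh, hG l})"
proof (intro conjI)
  have l0: "l > 0" and l2: "l \<ge> 2" using assms by (auto elim: evenE)
  have rh: "rh = emap l (False,False,False,True,True)" unfolding rh_def using rh_code[OF l0] .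
  show "card (generate (Gll l) {rh, hG l}) = 8"
    unfolding rh_def Del_gen[OF l0 assms(1)] using card_image[OF inj_emap_l2[OF l2]] cardCDel by simp
  show "group.ord (Gll l) rh = 4" unfolding rh
    by (rule ord4_emap[OF l0]) (simp_all add: cpow_num l2 assms(1))
  show "group.ord (Gll l) (hG l) = 2" unfolding hG_emap
    by (rule ord2_emap[OF l0]) (simp_all add: cpow_num l2)
  show "hG l \<otimes>\<^bsub>Gll l\<^esub> rh \<otimes>\<^bsub>Gll l\<^esub> inv\<^bsub>Gll l\<^esub> (hG l) = inv\<^bsub>Gll l\<^esub> rh"
    unfolding rh hG_emap using assms(1) by (simp add: emap_mult_G[OF l0] emap_inv_G[OF l0] cinv_expl)
  have comm: "cmul l a b = cmul l b a" if "a \<in> CD" "b \<in> CDel" for a b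
    using that assms(1) by (auto simp: CD_def CDel_def)
  have prod: "emap l ` CD <#>\<^bsub>Gll l\<^esub> emap l ` CDel = carrier (Gll l)"
    unfolding set_mult_emap[OF l0] carrier_G[OF l0]
  proof (intro equalityI subsetI)
    fix x assume "x \<in> range (emap l)"
    then obtain sw a b h r where x: "x = emap l (sw,a,b,h,r)" using all_codes by blast
    have "(sw,a,b,h,r) = cmul l (sw,a,b,False,False) (False,False,False,h,r)" by simp
    moreover have "(sw,a,b,False,False) \<in> CD" by (cases sw; cases a; cases b) (simp_all add: CD_def)
    moreover have "(False,False,False,h,r) \<in> CDel" by (cases h; cases r) (simp_all add: CDel_def)
    ultimately have "(sw,a,b,h,r) \<in> {cmul l a b |a b. a \<in> CD \<and> b \<in> CDel}"
      by (intro CollectI exI conjI) (rule refl | assumption)+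
    then show "x \<in> emap l ` {cmul l a b |a b. a \<in> CD \<and> b \<in> CDel}"
      unfolding x by (rule imageI)
  qed auto
  show "internal_central_product (Gll l) (generate (Gll l) {ns, sG l}) (generate (Gll l) {rh, hG l})"
    unfolding internal_central_product_def ns_def rh_def D_gen[OF l0] Del_gen[OF l0 assms(1)]
  proof (intro conjI ballI)
    show "subgroup (emap l ` CD) (Gll l)" by (rule subgroup_codes[OF l0 CD_closed])
    show "subgroup (emap l ` CDel) (Gll l)" by (rule subgroup_codes[OF l0 CDel_closed])
    fix x y assume "x \<in> emap l ` CD" "y \<in> emap l ` CDel"
    then obtain a b where ab: "a \<in> CD" "b \<in> CDel" "x = emap l a" "y = emap l b" by blast
    show "x \<otimes>\<^bsub>Gll l\<^esub> y = y \<otimes>\<^bsub>Gll l\<^esub> x"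
      unfolding ab(3,4) emap_mult_G[OF l0] comm[OF ab(1,2)] ..
  qed (rule prod)
qed


definition dcode :: "code \<Rightarrow> code" where "dcode c = (case c of (sw,a,b,h,r) \<Rightarrow> (sw,a,b,False,False))"
definition pcode :: "code \<Rightarrow> code" where "pcode c = (case c of (sw,a,b,h,r) \<Rightarrow> (h, \<not> h \<and> r, h \<and> r, False, False))"

lemma K1: "d \<in> CD \<Longrightarrow> cmul l (cmul l (dcode c) d) (pcode c) \<in> CD"
  apply (cases c)
  apply (simp only:)
  subgoal for sw1 a1 b1 h1 r1
    by (cases sw1; cases a1; cases b1; cases h1; cases r1) (auto simp: CD_def dcode_def pcode_def)
  done

lemma K2: "even l \<Longrightarrow> \<forall>d\<in>CD. cmul l (cmul l (dcode (cmul l c1 c2)) d) (pcode (cmul l c1 c2)) =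
   cmul l (cmul l (dcode c1) (cmul l (cmul l (dcode c2) d) (pcode c2))) (pcode c1)"
  apply (cases c1; cases c2)
  apply (simp only:)
  subgoal for sw1 a1 b1 h1 r1 sw2 a2 b2 h2 r2
    by (cases sw1; cases a1; cases b1; cases h1; cases r1; cases sw2; cases a2; cases b2; cases h2; cases r2)
      (simp_all add: CD_def dcode_def pcode_def)
  done

lemma K3: "(\<forall>d\<in>CD. cmul l (cmul l (dcode c1) d) (pcode c1) = cmul l (cmul l (dcode c2) d) (pcode c2)) \<Longrightarrow> c1 = c2"
  apply (cases c1; cases c2)
  apply (simp only:)
  subgoal for sw1 a1 b1 h1 r1 sw2 a2 b2 h2 r2
    by (cases sw1; cases a1; cases b1; cases h1; cases r1; cases sw2; cases a2; cases b2; cases h2; cases r2)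
      (simp_all add: CD_def dcode_def pcode_def)
  done

lemma K4: "d \<in> CD \<Longrightarrow> dcode d = d \<and> pcode d = c0"
  by (auto simp: CD_def dcode_def pcode_def)

lemma K5: "\<forall>d\<in>CD. \<exists>zf h r. \<forall>x\<in>CD.
   cmul l (cmul l (dcode (False,zf,zf,h,r)) x) (pcode (False,zf,zf,h,r)) = cmul l x d"
  by (simp add: CD_def dcode_def pcode_def ex_bool_eq)

lemma dcode_CD: "dcode c \<in> CD"
  by (cases c) (auto simp: dcode_def CD_def)
lemma pcode_CD: "pcode c \<in> CD"
  by (cases c) (auto simp: pcode_def CD_def)
lemma dcode_c0[simp]: "dcode c0 = c0" by (simp add: dcode_def)
lemma pcode_c0[simp]: "pcode c0 = c0" by (simp add: pcode_def)

definition Psi :: "nat \<Rightarrow> code \<Rightarrow> (complex poly \<times> complex poly \<Rightarrow> complex poly \<times> complex poly) \<Rightarrow> (complex poly \<times> complex poly \<Rightarrow> complex poly \<times> complex poly)" where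
  "Psi l c = (\<lambda>x\<in>emap l ` CD. emap l (dcode c) \<otimes>\<^bsub>Gll l\<^esub> x \<otimes>\<^bsub>Gll l\<^esub> emap l (pcode c))"

lemma Psi_emap: "l > 0 \<Longrightarrow> d \<in> CD \<Longrightarrow> Psi l c (emap l d) = emap l (cmul l (cmul l (dcode c) d) (pcode c))"
  by (simp add: Psi_def emap_mult_G del: cmul.simps)

lemma Psi_X: "l > 0 \<Longrightarrow> x \<in> emap l ` CD \<Longrightarrow> Psi l c x \<in> emap l ` CD"
  using Psi_emap K1 by blast

lemma Psi_mult: assumes "l > 0" "even l"
  shows "Psi l (cmul l c1 c2) = compose (emap l ` CD) (Psi l c1) (Psi l c2)"
proof (rule ext)
  fix x
  show "Psi l (cmul l c1 c2) x = compose (emap l ` CD) (Psi l c1) (Psi l c2) x"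
  proof (cases "x \<in> emap l ` CD")
    case True
    then obtain d where d: "d \<in> CD" "x = emap l d" by blast
    have d': "cmul l (cmul l (dcode c2) d) (pcode c2) \<in> CD" using K1[OF d(1)] .
    show ?thesis unfolding d(2) compose_def using True d(1)
      by (simp add: Psi_emap[OF assms(1) d(1)] Psi_emap[OF assms(1) d'] K2[OF assms(2)] del: cmul.simps)
  next
    case False
    then show ?thesis by (simp add: Psi_def compose_def)
  qed
qed

lemma Psi_c0: assumes "l > 0" shows "Psi l c0 = (\<lambda>x\<in>emap l ` CD. x)"
proof (rule ext)
  fix x show "Psi l c0 x = (\<lambda>x\<in>emap l ` CD. x) x"
  proof (cases "x \<in> emap l ` CD")
    case True
    then obtain d where d: "d \<in> CD" "x = emap l d" by blast
    show ?thesis using Psi_emap[OF assms d(1), of c0] d by simp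
  qed (simp add: Psi_def)
qed

lemma Psi_Bij: assumes "l > 0" "even l" shows "Psi l c \<in> Bij (emap l ` CD)"
proof -
  let ?X = "emap l ` CD"
  have inv1: "Psi l (cinv l c) (Psi l c x) = x" if "x \<in> ?X" for x
    using fun_cong[OF Psi_mult[OF assms, of "cinv l c" c], of x] that
    by (simp add: compose_def cinv_l Psi_c0[OF assms(1)] del: cmul.simps)
  have inv2: "Psi l c (Psi l (cinv l c) x) = x" if "x \<in> ?X" for x
    using fun_cong[OF Psi_mult[OF assms, of c "cinv l c"], of x] that
    by (simp add: compose_def cinv_r Psi_c0[OF assms(1)] del: cmul.simps)
  have "bij_betw (Psi l c) ?X ?X"
  proof (rule bij_betw_byWitness[where f'="Psi l (cinv l c)"])
    show "Psi l c ` ?X \<subseteq> ?X" "Psi l (cinv l c) ` ?X \<subseteq> ?X" using Psi_X[OF assms(1)] by blast+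
  qed (use inv1 inv2 in blast)+
  then show ?thesis unfolding Bij_def Psi_def by auto
qed

lemma Psi_BX_mult: assumes "l > 0" "even l"
  shows "Psi l c1 \<otimes>\<^bsub>BijGroup (emap l ` CD)\<^esub> Psi l c2 = Psi l (cmul l c1 c2)"
  using Psi_Bij[OF assms] Psi_mult[OF assms] by (simp add: BijGroup_def del: cmul.simps)

lemma Psi_subgroup: assumes "l > 0" "even l"
  shows "subgroup (range (Psi l)) (BijGroup (emap l ` CD))"
proof (rule subgroup.intro)
  let ?B = "BijGroup (emap l ` CD)"
  show "range (Psi l) \<subseteq> carrier ?B" using Psi_Bij[OF assms] by (auto simp: BijGroup_def)
  show "x \<otimes>\<^bsub>?B\<^esub> y \<in> range (Psi l)" if "x \<in> range (Psi l)" "y \<in> range (Psi l)" for x y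
    using that Psi_BX_mult[OF assms] by auto
  show "\<one>\<^bsub>?B\<^esub> \<in> range (Psi l)" using Psi_c0[OF assms(1)] by (auto simp: BijGroup_def intro!: range_eqI[of _ _ c0])
  show "inv\<^bsub>?B\<^esub> x \<in> range (Psi l)" if xr: "x \<in> range (Psi l)" for x
  proof -
    obtain c where c: "x = Psi l c" using xr by blast
    have "inv\<^bsub>?B\<^esub> x = Psi l (cinv l c)"
      apply (rule group.inv_equality[OF group_BijGroup])
      using Psi_BX_mult[OF assms] Psi_Bij[OF assms] Psi_c0[OF assms(1)] cinv_l c
      by (auto simp: BijGroup_def simp del: cmul.simps)
    then show ?thesis by simp
  qed
qed

lemma iso_part:
  assumes "even l" "l > 0"
  defines "ns \<equiv> nG l \<otimes>\<^bsub>Gll l\<^esub> sG l"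
  shows "Gll l \<cong> inner_holomorph (subgroup_generated (Gll l) {ns, sG l})"
proof -
  have l2: "l \<ge> 2" using assms by (auto elim: evenE)
  let ?G = "Gll l"
  let ?X = "emap l ` CD"
  let ?B = "BijGroup ?X"
  let ?DD = "subgroup_generated ?G {ns, sG l}"
  let ?LL = "(\<lambda>a. \<lambda>x\<in>?X. a \<otimes>\<^bsub>?G\<^esub> x) ` ?X"
  let ?RR = "(\<lambda>a. \<lambda>x\<in>?X. x \<otimes>\<^bsub>?G\<^esub> a) ` ?X"
  have nsS: "{ns, sG l} \<subseteq> carrier ?G"
    unfolding ns_def using carrier_G[OF assms(2)] by (simp only: ns_code[OF assms(2)]) (auto simp: sG_emap)
  have cD: "carrier ?DD = ?X"
    unfolding carrier_subgroup_generated using nsS D_gen[OF assms(2)] ns_def by (simp add: Int_absorb1)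
  have mD: "mult ?DD = mult ?G" by simp
  have IH: "inner_holomorph ?DD = subgroup_generated ?B (?LL \<union> ?RR)"
    unfolding inner_holomorph_def cD by simp
  have XG: "?X \<subseteq> carrier ?G" using carrier_G[OF assms(2)] by auto
  have Lpsi: "(\<lambda>x\<in>?X. emap l d \<otimes>\<^bsub>?G\<^esub> x) = Psi l d" if d: "d \<in> CD" for d
  proof (rule ext)
    fix x show "(\<lambda>x\<in>?X. emap l d \<otimes>\<^bsub>?G\<^esub> x) x = Psi l d x"
    proof (cases "x \<in> ?X")
      case True
      then obtain e where e: "e \<in> CD" "x = emap l e" by blast
      show ?thesis unfolding e(2) using e(1) K4[OF d]
        by (simp add: Psi_emap[OF assms(2) e(1)] emap_mult_G[OF assms(2)] del: cmul.simps)
    qed (simp add: Psi_def)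
  qed
  have Rpsi: "\<exists>c. (\<lambda>x\<in>?X. x \<otimes>\<^bsub>?G\<^esub> emap l d) = Psi l c" if d: "d \<in> CD" for d
  proof -
    obtain zf h r where zhr: "\<forall>x\<in>CD. cmul l (cmul l (dcode (False,zf,zf,h,r)) x) (pcode (False,zf,zf,h,r)) = cmul l x d"
      using K5 d by blast
    have "(\<lambda>x\<in>?X. x \<otimes>\<^bsub>?G\<^esub> emap l d) = Psi l (False,zf,zf,h,r)"
    proof (rule ext)
      fix x show "(\<lambda>x\<in>?X. x \<otimes>\<^bsub>?G\<^esub> emap l d) x = Psi l (False,zf,zf,h,r) x"
      proof (cases "x \<in> ?X")
        case True
        then obtain e where e: "e \<in> CD" "x = emap l e" by blast
        show ?thesis unfolding e(2) using e(1) zhr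
          by (simp add: Psi_emap[OF assms(2) e(1)] emap_mult_G[OF assms(2)] del: cmul.simps)
      qed (simp add: Psi_def)
    qed
    then show ?thesis by blast
  qed
  have LR: "?LL \<union> ?RR \<subseteq> range (Psi l)"
    using Lpsi Rpsi by blast
  have LRB: "?LL \<union> ?RR \<subseteq> carrier ?B"
  proof -
    have "range (Psi l) \<subseteq> carrier ?B" using Psi_Bij[OF assms(2,1)] by (auto simp: BijGroup_def)
    then show ?thesis using LR by (rule subset_trans[rotated])
  qed
  have cIH: "carrier (inner_holomorph ?DD) = range (Psi l)"
  proof -
    have "carrier (inner_holomorph ?DD) = generate ?B (?LL \<union> ?RR)"
      unfolding IH carrier_subgroup_generated using LRB by (simp add: Int_absorb1)
    also have "\<dots> = range (Psi l)"
    proof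
      show "generate ?B (?LL \<union> ?RR) \<subseteq> range (Psi l)"
        by (rule group.generate_subgroup_incl[OF group_BijGroup LR Psi_subgroup[OF assms(2,1)]])
      show "range (Psi l) \<subseteq> generate ?B (?LL \<union> ?RR)"
      proof clarify
        fix c
        let ?a = "emap l (dcode c)" and ?b = "emap l (pcode c)"
        have aX: "?a \<in> ?X" and bX: "?b \<in> ?X" using dcode_CD pcode_CD by blast+
        let ?La = "\<lambda>x\<in>?X. ?a \<otimes>\<^bsub>?G\<^esub> x" and ?Rb = "\<lambda>x\<in>?X. x \<otimes>\<^bsub>?G\<^esub> ?b"
        have La: "?La \<in> generate ?B (?LL \<union> ?RR)" using aX by (blast intro: generate.incl)
        have Rb: "?Rb \<in> generate ?B (?LL \<union> ?RR)" using bX by (blast intro: generate.incl)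
        have LaB: "?La \<in> Bij ?X" and RbB: "?Rb \<in> Bij ?X" using LRB aX bX by (auto simp: BijGroup_def)
        have closed: "x \<otimes>\<^bsub>?G\<^esub> ?b \<in> ?X" if "x \<in> ?X" for x
          using that bX CD_closed(2) emap_mult_G[OF assms(2)] by (auto simp del: cmul.simps)
        have "Psi l c = ?La \<otimes>\<^bsub>?B\<^esub> ?Rb"
        proof -
          have "?La \<otimes>\<^bsub>?B\<^esub> ?Rb = compose ?X ?La ?Rb" using LaB RbB by (simp add: BijGroup_def)
          also have "\<dots> = Psi l c"
          proof (rule ext)
            fix x show "compose ?X ?La ?Rb x = Psi l c x"
            proof (cases "x \<in> ?X")
              case True
              have "compose ?X ?La ?Rb x = ?a \<otimes>\<^bsub>?G\<^esub> (x \<otimes>\<^bsub>?G\<^esub> ?b)"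
                using True closed[OF True] by (simp add: compose_def)
              also have "\<dots> = ?a \<otimes>\<^bsub>?G\<^esub> x \<otimes>\<^bsub>?G\<^esub> ?b"
                using True aX bX XG by (intro monoid.m_assoc[OF group.is_monoid[OF group_G], symmetric]) auto
              also have "\<dots> = Psi l c x" using True by (simp add: Psi_def)
              finally show ?thesis .
            qed (simp add: compose_def Psi_def)
          qed
          finally show ?thesis by simp
        qed
        then show "Psi l c \<in> generate ?B (?LL \<union> ?RR)" using generate.eng[OF La Rb] by simp
      qed
    qed
    finally show ?thesis .
  qed
  define Phi where "Phi t = Psi l (inv_into UNIV (emap l) t)" for t
  have Phi_emap: "Phi (emap l c) = Psi l c" for c
    unfolding Phi_def using inv_into_f_f[OF inj_emap_l2[OF l2, of UNIV]] by simp
  have "Phi \<in> iso ?G (inner_holomorph ?DD)"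
    unfolding iso_iff
  proof (intro conjI)
    show "Phi \<in> hom ?G (inner_holomorph ?DD)"
      unfolding hom_def
    proof (intro CollectI conjI ballI)
      show "Phi \<in> carrier ?G \<rightarrow> carrier (inner_holomorph ?DD)"
        unfolding cIH carrier_G[OF assms(2)] by (auto simp: Phi_emap)
      fix x y assume "x \<in> carrier ?G" "y \<in> carrier ?G"
      then obtain a b where ab: "x = emap l a" "y = emap l b" unfolding carrier_G[OF assms(2)] by blast
      have "mult (inner_holomorph ?DD) = mult ?B" unfolding IH by simp
      then show "Phi (x \<otimes>\<^bsub>?G\<^esub> y) = Phi x \<otimes>\<^bsub>inner_holomorph ?DD\<^esub> Phi y"
        unfolding ab by (simp add: emap_mult_G[OF assms(2)] Phi_emap Psi_BX_mult[OF assms(2,1)] del: cmul.simps)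
    qed
    show "Phi ` carrier ?G = carrier (inner_holomorph ?DD)"
      unfolding cIH carrier_G[OF assms(2)] by (simp add: image_image Phi_emap)
    show "inj_on Phi (carrier ?G)"
    proof (rule inj_onI)
      fix x y assume "x \<in> carrier ?G" "y \<in> carrier ?G" and eq: "Phi x = Phi y"
      then obtain a b where ab: "x = emap l a" "y = emap l b" unfolding carrier_G[OF assms(2)] by blast
      have "Psi l a = Psi l b" using eq unfolding ab Phi_emap .
      then have "\<forall>d\<in>CD. cmul l (cmul l (dcode a) d) (pcode a) = cmul l (cmul l (dcode b) d) (pcode b)"
        using Psi_emap[OF assms(2)] emap_inj[OF assms(2) _ disjI1[OF l2]] by (metis (no_types, lifting))
      then have "a = b" by (rule K3)
      then show "x = y" using ab by simp
    qed
  qed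
  then show ?thesis unfolding is_iso_def by blast
qed


lemma periodic_shift:
  fixes F :: "real \<Rightarrow> real"
  assumes cont: "continuous_on UNIV F" and per: "\<And>x. F (x + 2*pi) = F x"
  shows "integral {0..2*pi} (\<lambda>\<theta>. F (\<theta> + pi)) = integral {0..2*pi} F"
proof -
  have int: "F integrable_on {a..b}" for a b
    by (rule integrable_continuous_real) (rule continuous_on_subset[OF cont], simp)
  have "integral {0..2*pi} (\<lambda>\<theta>. F (\<theta> + pi)) = integral {0..2*pi} (F \<circ> (+) pi)"
    by (simp add: o_def add.commute)
  also have "\<dots> = integral {pi..3*pi} F"
    using integral_shift_Icc_real[of 0 "2*pi" F pi] by simp
  also have "\<dots> = integral {pi..2*pi} F + integral {2*pi..3*pi} F"
    by (rule Henstock_Kurzweil_Integration.integral_combine[symmetric]) (use int in auto)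
  also have "integral {2*pi..3*pi} F = integral {0..pi} (F \<circ> (+) (2*pi))"
    using integral_shift_Icc_real[of 0 pi F "2*pi"] by simp
  also have "F \<circ> (+) (2*pi) = F" using per by (auto simp: o_def add.commute)
  also have "integral {pi..2*pi} F + integral {0..pi} F = integral {0..2*pi} F"
    using Henstock_Kurzweil_Integration.integral_combine[of 0 pi "2*pi" F] int by (simp add: add.commute)
  finally show ?thesis .
qed

lemma cis_plus_2pi: "cis (x + 2*pi) = cis x"
  by (simp add: complex_eq_iff)

lemma cis_plus_pi: "cis (x + pi) = - cis x"
  by (simp add: complex_eq_iff)

lemma lp_cong: "(\<And>\<theta>. norm (poly q1 (cis \<theta>)) = norm (poly q2 (cis \<theta>))) \<Longrightarrow> lpnorm p q1 = lpnorm p q2"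
  by (simp add: lpnorm_def)

lemma lp_ptilde: assumes "p > 0" shows "lpnorm p (ptilde q) = lpnorm p q"
proof -
  let ?F = "\<lambda>\<theta>. norm (poly q (cis \<theta>)) powr p"
  have cont: "continuous_on UNIV ?F"
    by (rule continuous_on_powr') (use assms in \<open>auto intro!: continuous_intros\<close>)
  have "integral {0..2*pi} (\<lambda>\<theta>. norm (poly (ptilde q) (cis \<theta>)) powr p) = integral {0..2*pi} (\<lambda>\<theta>. ?F (\<theta> + pi))"
    by (simp add: cis_plus_pi)
  also have "\<dots> = integral {0..2*pi} ?F"
    by (rule periodic_shift[OF cont]) (simp add: cis_plus_2pi)
  finally show ?thesis by (simp add: lpnorm_def)
qed

lemma cm_cong: "(\<And>\<theta>. F1 (cis \<theta>) = F2 (cis \<theta>)) \<Longrightarrow> circ_mean F1 = circ_mean F2"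
  by (simp add: circ_mean_def)

lemma cm_cnj: assumes "\<And>\<theta>. F1 (cis \<theta>) = cnj (F2 (cis \<theta>))" shows "Re (circ_mean F1) = Re (circ_mean F2)"
proof -
  have "circ_mean F1 = cnj (circ_mean F2)"
    by (simp add: circ_mean_def assms integral_cnj)
  then show ?thesis by simp
qed

lemma poly_pdagger_circle: assumes "norm z = 1" shows "poly (pdagger q) z = z ^ Polynomial.degree q * cnj (poly q z)"
proof -
  have z0: "z \<noteq> 0" using assms by auto
  have "z * cnj z = 1" using complex_norm_square[of z] assms by simp
  then have inv: "inverse (cnj z) = z" by (intro inverse_unique) (simp add: mult.commute)
  have "poly (pdagger q) z = cnj (poly (reflect_poly q) (cnj z))" by (simp add: pdagger_def)
  also have "\<dots> = cnj (cnj z ^ Polynomial.degree q * poly q (inverse (cnj z)))"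
    using z0 by (simp add: poly_reflect_poly_nz)
  also have "\<dots> = z ^ Polynomial.degree q * cnj (poly q z)" by (simp add: inv)
  finally show ?thesis .
qed

lemma norm_pdagger_circle: "norm (poly (pdagger q) (cis \<theta>)) = norm (poly q (cis \<theta>))"
  by (simp add: poly_pdagger_circle norm_mult norm_power)


definition Qv :: "real \<Rightarrow> complex poly \<times> complex poly \<Rightarrow> real \<times> real \<times> real \<times> real" where
  "Qv p x = (case x of (f,g) \<Rightarrow> (lpnorm p f * lpnorm p g, lpnorm p (f*g), lpnorm p (f * ptilde g),
     Re (circ_mean (\<lambda>z. poly (f * ptilde f) z * cnj (poly (g * ptilde g) z)))))"

lemma Q_n: "Qv p (-f, g) = Qv p (f, g)"
proof -
  have "lpnorm p (-f) = lpnorm p f" by (rule lp_cong) simp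
  moreover have "lpnorm p (-f * g) = lpnorm p (f * g)" by (rule lp_cong) simp
  moreover have "lpnorm p (-f * ptilde g) = lpnorm p (f * ptilde g)" by (rule lp_cong) simp
  ultimately show ?thesis by (simp add: Qv_def)
qed

lemma Q_n2: "Qv p (f, -g) = Qv p (f, g)"
proof -
  have "lpnorm p (-g) = lpnorm p g" by (rule lp_cong) simp
  moreover have "lpnorm p (f * -g) = lpnorm p (f * g)" by (rule lp_cong) simp
  moreover have "lpnorm p (f * ptilde (-g)) = lpnorm p (f * ptilde g)" by (rule lp_cong) simp
  ultimately show ?thesis by (simp add: Qv_def)
qed

lemma Q_s: assumes "p > 0" shows "Qv p (g, f) = Qv p (f, g)"
proof -
  have "g * ptilde f = ptilde (f * ptilde g)" by (simp add: ptilde_mult mult.commute)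
  then have "lpnorm p (g * ptilde f) = lpnorm p (f * ptilde g)" using lp_ptilde[OF assms] by simp
  moreover have "Re (circ_mean (\<lambda>z. poly (g * ptilde g) z * cnj (poly (f * ptilde f) z))) =
     Re (circ_mean (\<lambda>z. poly (f * ptilde f) z * cnj (poly (g * ptilde g) z)))"
    by (rule cm_cnj) (simp add: mult.commute)
  ultimately show ?thesis by (simp add: Qv_def mult.commute)
qed

lemma Q_h: assumes "p > 0" shows "Qv p (ptilde f, ptilde g) = Qv p (f, g)"
proof -
  have "lpnorm p (ptilde f * ptilde g) = lpnorm p (f * g)"
    using lp_ptilde[OF assms, of "f*g"] by (simp add: ptilde_mult)
  moreover have "lpnorm p (ptilde f * ptilde (ptilde g)) = lpnorm p (f * ptilde g)"
    using lp_ptilde[OF assms, of "f * ptilde g"] by (simp add: ptilde_mult)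
  moreover have "ptilde f * ptilde (ptilde f) = f * ptilde f" by (simp add: mult.commute)
  moreover have "ptilde g * ptilde (ptilde g) = g * ptilde g" by (simp add: mult.commute)
  moreover have "lpnorm p (ptilde f) = lpnorm p f" "lpnorm p (ptilde g) = lpnorm p g" using lp_ptilde[OF assms] by auto
  ultimately show ?thesis unfolding Qv_def prod.case by (simp only:)
qed

lemma norm_pdagger_unit: "norm z = 1 \<Longrightarrow> norm (poly (pdagger q) z) = norm (poly q z)"
  by (simp add: poly_pdagger_circle norm_mult norm_power)

lemma Q_r: assumes "f \<in> Pl l" "g \<in> Pl l" shows "Qv p (pdagger f, pdagger g) = Qv p (f, g)"
proof -
  have n1: "norm (- cis \<theta>) = 1" for \<theta> by simp
  have "lpnorm p (pdagger f) = lpnorm p f" by (rule lp_cong) (simp add: norm_pdagger_unit)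
  moreover have "lpnorm p (pdagger g) = lpnorm p g" by (rule lp_cong) (simp add: norm_pdagger_unit)
  moreover have "lpnorm p (pdagger f * pdagger g) = lpnorm p (f * g)"
    by (rule lp_cong) (simp add: norm_pdagger_unit norm_mult)
  moreover have "lpnorm p (pdagger f * ptilde (pdagger g)) = lpnorm p (f * ptilde g)"
    by (rule lp_cong) (simp add: norm_pdagger_unit norm_mult n1)
  moreover have "Re (circ_mean (\<lambda>z. poly (pdagger f * ptilde (pdagger f)) z * cnj (poly (pdagger g * ptilde (pdagger g)) z))) =
     Re (circ_mean (\<lambda>z. poly (f * ptilde f) z * cnj (poly (g * ptilde g) z)))"
  proof (rule cm_cnj)
    fix \<theta>
    define z where "z = cis \<theta>"
    have z1: "norm z = 1" "norm (-z) = 1" by (simp_all add: z_def)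
    have zz: "z * cnj z = 1" using complex_norm_square[of z] z1 by simp
    have zz': "(-z) * cnj (-z) = 1" using zz by simp
    define d where "d = l - 1"
    have dg: "Polynomial.degree f = d" "Polynomial.degree g = d" using assms by (auto simp: Pl_def d_def)
    define w where "w = - z"
    have w1: "norm w = 1" using z1 by (simp add: w_def)
    have zd: "z ^ d * cnj z ^ d = 1" using zz by (simp add: power_mult_distrib[symmetric])
    have wd: "w ^ d * cnj w ^ d = 1" using zz' by (simp add: power_mult_distrib[symmetric] w_def)
    have pt: "poly (ptilde q) z = poly q w" for q by (simp add: w_def)
    have "poly (pdagger f * ptilde (pdagger f)) z * cnj (poly (pdagger g * ptilde (pdagger g)) z)
       = z ^ d * cnj (poly f z) * (w ^ d * cnj (poly f w)) * cnj (z ^ d * cnj (poly g z) * (w ^ d * cnj (poly g w)))"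
      by (simp only: poly_mult pt poly_pdagger_circle[OF z1(1)] poly_pdagger_circle[OF w1] dg)
    also have "\<dots> = (z ^ d * cnj z ^ d) * (w ^ d * cnj w ^ d) * (cnj (poly f z) * cnj (poly f w) * (poly g z * poly g w))"
      by (simp only: complex_cnj_mult complex_cnj_power complex_cnj_cnj) (simp only: mult_ac)
    also have "\<dots> = cnj (poly (f * ptilde f) z * cnj (poly (g * ptilde g) z))"
      by (simp only: zd wd poly_mult pt complex_cnj_mult complex_cnj_cnj mult_1_left)
    finally show "poly (pdagger f * ptilde (pdagger f)) (cis \<theta>) * cnj (poly (pdagger g * ptilde (pdagger g)) (cis \<theta>)) =
       cnj (poly (f * ptilde f) (cis \<theta>) * cnj (poly (g * ptilde g) (cis \<theta>)))" unfolding z_def .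
  qed
  ultimately show ?thesis by (simp add: Qv_def)
qed

definition "InvQ l p c \<longleftrightarrow> (\<forall>x\<in>PP l. Qv p (act c x) = Qv p x)"

lemma InvQ_mult: "l > 0 \<Longrightarrow> InvQ l p a \<Longrightarrow> InvQ l p b \<Longrightarrow> InvQ l p (cmul l a b)"
  unfolding InvQ_def using act_mult act_Pl by (metis (no_types, lifting))

lemma InvQ_c0: "InvQ l p c0"
  by (simp add: InvQ_def act_c0 del: act.simps)

lemma InvQ_pw: "InvQ l p c \<Longrightarrow> InvQ l p (pw b c)"
  using InvQ_c0 by (simp add: pw_def)

lemma InvQ_all:
  assumes "l > 0" "p > 0" shows "InvQ l p c"
proof -
  have n: "InvQ l p cn" by (auto simp: InvQ_def ng_def Tm_def Q_n)
  have s: "InvQ l p cs" by (auto simp: InvQ_def ng_def Tm_def Q_s[OF assms(2)])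
  have h: "InvQ l p ch" by (auto simp: InvQ_def ng_def Tm_def Q_h[OF assms(2)])
  have r: "InvQ l p cr" by (auto simp: InvQ_def ng_def Tm_def Q_r)
  note M = InvQ_mult[OF assms(1)] and W = InvQ_pw
  obtain sw e1 e2 hh rr where c: "c = (sw,e1,e2,hh,rr)" by (cases c) auto
  show ?thesis unfolding c code_decomp[of l e1 e2 rr hh sw, symmetric]
    by (intro M W n s h r)
qed

lemma norms_part:
  assumes "l > 0" "t \<in> carrier (Gll l)" "f \<in> Pl l" "g \<in> Pl l" "p \<ge> 1"
  shows "(let a = fst (t (f, g)); b = snd (t (f, g)) in
          lpnorm p a * lpnorm p b = lpnorm p f * lpnorm p g \<and>
          lpnorm p (a * b) = lpnorm p (f * g) \<and>
          lpnorm p (a * ptilde b) = lpnorm p (f * ptilde g) \<and>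
          Re (circ_mean (\<lambda>z. poly (a * ptilde a) z * cnj (poly (b * ptilde b) z))) =
          Re (circ_mean (\<lambda>z. poly (f * ptilde f) z * cnj (poly (g * ptilde g) z))))"
proof -
  obtain c where c: "t = emap l c" using assms(2) carrier_G[OF assms(1)] by blast
  have "t (f, g) = act c (f, g)" using assms(3,4) by (simp add: c emap_def del: act.simps)
  moreover have "Qv p (act c (f, g)) = Qv p (f, g)"
    using InvQ_all[OF assms(1), of p c] assms(3-5) unfolding InvQ_def by auto
  ultimately have "Qv p (t (f, g)) = Qv p (f, g)" by simp
  then show ?thesis by (cases "t (f, g)") (simp add: Qv_def Let_def)
qed


theorem proposition3p4:
  fixes l :: nat
  assumes "l > 0"
  defines "G \<equiv> Gll l"
    and "ns \<equiv> nG l \<otimes>\<^bsub>Gll l\<^esub> sG l"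
    and "rh \<equiv> rG l \<otimes>\<^bsub>Gll l\<^esub> hG l"
  shows
    "group G \<and>
     carrier G \<subseteq> carrier (BijGroup (Pl l \<times> Pl l)) \<and>
     {sG l, nG l, hG l, rG l} \<subseteq> carrier G \<and>
     subgroup (generate G {ns, sG l}) G \<and>
     card (generate G {ns, sG l}) = 8 \<and>
     group.ord G ns = 4 \<and> group.ord G (sG l) = 2 \<and>
     sG l \<otimes>\<^bsub>G\<^esub> ns \<otimes>\<^bsub>G\<^esub> inv\<^bsub>G\<^esub> (sG l) = inv\<^bsub>G\<^esub> ns \<and>
     (l = 1 \<longrightarrow>
        group.ord G (rG l) = 2 \<and>
        internal_direct_product2 G (generate G {ns, sG l}) (generate G {rG l})) \<and>
     (odd l \<and> l > 1 \<longrightarrow>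
        group.ord G (hG l) = 2 \<and> group.ord G (rG l) = 2 \<and>
        internal_direct_product3 G (generate G {ns, sG l}) (generate G {hG l}) (generate G {rG l})) \<and>
     (even l \<longrightarrow>
        card (generate G {rh, hG l}) = 8 \<and>
        group.ord G rh = 4 \<and> group.ord G (hG l) = 2 \<and>
        hG l \<otimes>\<^bsub>G\<^esub> rh \<otimes>\<^bsub>G\<^esub> inv\<^bsub>G\<^esub> (hG l) = inv\<^bsub>G\<^esub> rh \<and>
        internal_central_product G (generate G {ns, sG l}) (generate G {rh, hG l}) \<and>
        G \<cong> inner_holomorph (subgroup_generated G {ns, sG l})) \<and>
     (\<forall>t\<in>carrier G. \<forall>f\<in>Pl l. \<forall>g\<in>Pl l. \<forall>p::real. p \<ge> 1 \<longrightarrow>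
        (let a = fst (t (f, g)); b = snd (t (f, g)) in
          lpnorm p a * lpnorm p b = lpnorm p f * lpnorm p g \<and>
          lpnorm p (a * b) = lpnorm p (f * g) \<and>
          lpnorm p (a * ptilde b) = lpnorm p (f * ptilde g) \<and>
          Re (circ_mean (\<lambda>z. poly (a * ptilde a) z * cnj (poly (b * ptilde b) z))) =
          Re (circ_mean (\<lambda>z. poly (f * ptilde f) z * cnj (poly (g * ptilde g) z)))))"
proof -
  have l0: "l > 0" by (rule assms(1))
  have h1: "group (Gll l)" by (rule group_G)
  have h2: "carrier (Gll l) \<subseteq> carrier (BijGroup (Pl l \<times> Pl l))"
    using carrier_G[OF l0] emap_carrier[OF l0] by auto
  have h3: "{sG l, nG l, hG l, rG l} \<subseteq> carrier (Gll l)"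
    using carrier_G[OF l0] by (auto simp: sG_emap nG_emap hG_emap rG_emap)
  have nsS: "{nG l \<otimes>\<^bsub>Gll l\<^esub> sG l, sG l} \<subseteq> carrier (Gll l)"
    using carrier_G[OF l0] by (simp only: ns_code[OF l0]) (auto simp: sG_emap)
  have h4: "subgroup (generate (Gll l) {nG l \<otimes>\<^bsub>Gll l\<^esub> sG l, sG l}) (Gll l)"
    by (rule group.generate_is_subgroup[OF group_G nsS])
  note h5 = part_D[OF l0]
  have h9: "l = 1 \<longrightarrow> group.ord (Gll l) (rG l) = 2 \<and>
        internal_direct_product2 (Gll l) (generate (Gll l) {nG l \<otimes>\<^bsub>Gll l\<^esub> sG l, sG l}) (generate (Gll l) {rG l})"
    using part_l1 by blast
  have h10: "odd l \<and> l > 1 \<longrightarrow> group.ord (Gll l) (hG l) = 2 \<and> group.ord (Gll l) (rG l) = 2 \<and>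
        internal_direct_product3 (Gll l) (generate (Gll l) {nG l \<otimes>\<^bsub>Gll l\<^esub> sG l, sG l}) (generate (Gll l) {hG l}) (generate (Gll l) {rG l})"
    using part_odd by blast
  have h11: "even l \<longrightarrow> card (generate (Gll l) {rG l \<otimes>\<^bsub>Gll l\<^esub> hG l, hG l}) = 8 \<and>
        group.ord (Gll l) (rG l \<otimes>\<^bsub>Gll l\<^esub> hG l) = 4 \<and> group.ord (Gll l) (hG l) = 2 \<and>
        hG l \<otimes>\<^bsub>Gll l\<^esub> (rG l \<otimes>\<^bsub>Gll l\<^esub> hG l) \<otimes>\<^bsub>Gll l\<^esub> inv\<^bsub>Gll l\<^esub> (hG l) = inv\<^bsub>Gll l\<^esub> (rG l \<otimes>\<^bsub>Gll l\<^esub> hG l) \<and>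
        internal_central_product (Gll l) (generate (Gll l) {nG l \<otimes>\<^bsub>Gll l\<^esub> sG l, sG l}) (generate (Gll l) {rG l \<otimes>\<^bsub>Gll l\<^esub> hG l, hG l}) \<and>
        Gll l \<cong> inner_holomorph (subgroup_generated (Gll l) {nG l \<otimes>\<^bsub>Gll l\<^esub> sG l, sG l})"
    using part_even[OF _ l0] iso_part[OF _ l0] by blast
  have h12: "\<forall>t\<in>carrier (Gll l). \<forall>f\<in>Pl l. \<forall>g\<in>Pl l. \<forall>p::real. p \<ge> 1 \<longrightarrow>
        (let a = fst (t (f, g)); b = snd (t (f, g)) in
          lpnorm p a * lpnorm p b = lpnorm p f * lpnorm p g \<and>
          lpnorm p (a * b) = lpnorm p (f * g) \<and>
          lpnorm p (a * ptilde b) = lpnorm p (f * ptilde g) \<and>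
          Re (circ_mean (\<lambda>z. poly (a * ptilde a) z * cnj (poly (b * ptilde b) z))) =
          Re (circ_mean (\<lambda>z. poly (f * ptilde f) z * cnj (poly (g * ptilde g) z))))"
    using norms_part[OF l0] by blast
  show ?thesis unfolding G_def ns_def rh_def
    using h1 h2 h3 h4 h5 h9 h10 h11 h12 by blast
qed

end
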